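(* Let $k$ be a field containing a primitive $m$-th root of unity $\omega$ (and all $m$-th roots of unity). Let $\mathcal A$ be a perfect $k$-algebra and $S$ a commutative, associative, unital $k$-algebra such that the map $\psi:C(\mathcal A)\otimes S\to C(\mathcal A\otimes S)$, $\gamma\otimes s\mapsto\gamma\otimes L_s$, is an isomorphism. Let $\sigma_1,\sigma_2$ be automorphisms of period $m$ of $\mathcal A$ and $S$ respectively, and consider the $\mathbb Z_m$-gradings they induce. Then $\mathcal D(\mathcal A\otimes S)=\sum_{\bar j\in\mathbb Z_m}\mathcal D(\mathcal A\otimes S)_{\bar j}$ and for each $\bar j\in\mathbb Z_m$, $$\mathcal D(\mathcal A\otimes S)_{\bar j}=\big(\mathcal D(\mathcal A)\overleftarrow{\otimes} S\big)_{\bar j}\oplus\big(C(\mathcal A)\overrightarrow{\otimes}\mathcal D(S)\big)_{\bar j},$$ where $\big(\mathcal D(\mathcal A)\overleftarrow{\otimes} S\big)_{\bar j}:=\big(\mathcal D(\mathcal A)\overleftarrow{\otimes} S\big)\cap\mathcal D(\mathcal A\otimes S)_{\bar j}$ and $\big(C(\mathcal A)\overrightarrow{\otimes}\mathcal D(S)\big)_{\bar j}:=\big(C(\mathcal A)\overrightarrow{\otimes}\mathcal D(S)\big)\cap\mathcal D(\mathcal A\otimes S)_{\bar j}$, and moreover $$\big(\mathcal D(\mathcal A)\overleftarrow{\otimes} S\big)_{\bar j}=\sum_{\bar k\in\mathbb Z_m}\mathcal D(\mathcal A)_{\bar k}\overleftarrow{\otimes} S_{\bar j-\bar k},\qquad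 \big(C(\mathcal A)\overrightarrow{\otimes}\mathcal D(S)\big)_{\bar j}=\sum_{\bar k\in\mathbb Z_m}C(\mathcal A)_{\bar k}\overrightarrow{\otimes}\mathcal D(S)_{\bar j-\bar k}.$$
   Context: Algebras are $k$-vector spaces with bilinear product (not necessarily associative); perfect means $\mathcal A\mathcal A=\mathcal A$; $C(\mathcal A)=\{\gamma\in\operatorname{End}(\mathcal A)\mid\gamma(xy)=\gamma(x)y=x\gamma(y)\}$ is the centroid; $\mathcal D(\cdot)$ denotes derivations; $L_s$ is left multiplication. Period $m$ means $\sigma^m=\mathrm{id}$. For a period-$m$ automorphism $\sigma$ of $\mathcal A$, $\mathcal A_{\bar i}=\{a\mid\sigma(a)=\omega^ia\}$; $\sigma^*(T)=\sigma T\sigma^{-1}$ on $\operatorname{End}(\mathcal A)$ gives $\operatorname{End}(\mathcal A)_{\bar i}=\{T\mid T(\mathcal A_{\bar j})\subseteq\mathcal A_{\bar i+\bar j}\ \forall\bar j\}$, and $\mathcal D(\mathcal A)_{\bar i}=\mathcal D(\mathcal A)\cap\operatorname{End}(\mathcal A)_{\bar i}$, $C(\mathcal A)_{\bar i}=C(\mathcal A)\cap\operatorname{End}(\mathcal A)_{\bar i}$; similarly for $S$ with $\sigma_2$, and for $\mathcal A\otimes S$ with $\sigma=\sigma_1\otimes\sigma_2$, so $(\mathcal A\otimes S)_{\bar i}=\sum_{\bar j}\mathcal A_{\bar i-\bar j}\otimes S_{\bar j}$ and $\mathcal D(\mathcal A\otimes S)_{\bar i}$ are the derivations mapping $(\mathcal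 A\otimes S)_{\bar j}$ into $(\mathcal A\otimes S)_{\bar i+\bar j}$ for all $\bar j$. A family $\{f_i\}$ of endomorphisms of $V$ is summable if for each $v$, $f_i(v)=0$ for all but finitely many $i$. For subspaces $E_V\subseteq\operatorname{End}(V)$, $E_W\subseteq\operatorname{End}(W)$: $E_V\overleftarrow{\otimes}E_W$ is the set of operators $\sum_if_i\otimes g_i$ on $V\otimes W$ with $\{f_i\}\subseteq E_V$ summable on $V$ and $\{g_i\}\subseteq E_W$ arbitrary; given a basis $\{f_i\}$ of $E_V$, $E_V\overrightarrow{\otimes}E_W$ is the set of $\sum_if_i\otimes g_i$ with $\{g_i\}\subseteq E_W$ summable on $W$. $S$ and its subspaces $S_{\bar k}$ are viewed in $\operatorname{End}(S)$ via left multiplication; everything is regarded inside $\operatorname{End}(\mathcal A\otimes S)$. *)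

theory Defs
  imports "HOL-Library.Poly_Mapping"
begin

text \<open>Vector spaces over the field 'k are modelled by a chosen basis: a k-vector space
with basis indexed by the type 'a is the space of finitely supported functions
'a =>0 'k.  Every vector space is of this form (up to isomorphism),
and an algebra structure is an arbitrary bilinear product on it.\<close>

type_synonym ('a,'k) vec = "'a \<Rightarrow>\<^sub>0 'k"
type_synonym ('a,'k) op = "('a \<Rightarrow>\<^sub>0 'k) \<Rightarrow> ('a \<Rightarrow>\<^sub>0 'k)"
type_synonym ('a,'k) prod = "('a \<Rightarrow>\<^sub>0 'k) \<Rightarrow> ('a \<Rightarrow>\<^sub>0 'k) \<Rightarrow> ('a \<Rightarrow>\<^sub>0 'k)"

definition sc :: "'k::field \<Rightarrow> ('a,'k) vec \<Rightarrow> ('a,'k) vec" where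
  "sc r x = Poly_Mapping.map (\<lambda>c. r * c) x"

definition lin :: "('a,'k::field) op \<Rightarrow> bool" where
  "lin T \<longleftrightarrow> (\<forall>x y. T (x + y) = T x + T y) \<and> (\<forall>r x. T (sc r x) = sc r (T x))"

definition bilin :: "('a,'k::field) prod \<Rightarrow> bool" where
  "bilin M \<longleftrightarrow> (\<forall>x. lin (M x)) \<and> (\<forall>y. lin (\<lambda>x. M x y))"

definition perfect :: "('a,'k::field) prod \<Rightarrow> bool" where
  "perfect M \<longleftrightarrow> (\<forall>x. \<exists>ps. x = sum_list (map (\<lambda>(a,b). M a b) ps))"

definition centroid :: "('a,'k::field) prod \<Rightarrow> ('a,'k) op set" where
  "centroid M = {\<gamma>. lin \<gamma> \<and> (\<forall>x y. \<gamma> (M x y) = M (\<gamma> x) y \<and> \<gamma> (M x y) = M x (\<gamma> y))}"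

definition derivations :: "('a,'k::field) prod \<Rightarrow> ('a,'k) op set" where
  "derivations M = {d. lin d \<and> (\<forall>x y. d (M x y) = M (d x) y + M x (d y))}"

definition comm_assoc_unital :: "('a,'k::field) prod \<Rightarrow> bool" where
  "comm_assoc_unital M \<longleftrightarrow> (\<forall>x y. M x y = M y x) \<and> (\<forall>x y z. M (M x y) z = M x (M y z))
     \<and> (\<exists>e. \<forall>x. M e x = x)"

definition automorphism :: "('a,'k::field) prod \<Rightarrow> ('a,'k) op \<Rightarrow> bool" where
  "automorphism M \<sigma> \<longleftrightarrow> lin \<sigma> \<and> bij \<sigma> \<and> (\<forall>x y. \<sigma> (M x y) = M (\<sigma> x) (\<sigma> y))"

text \<open>Homogeneous component of degree i (i taken mod m): eigenspace for \<omega>^i.\<close>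
definition eigsp :: "'k::field \<Rightarrow> ('a,'k) op \<Rightarrow> nat \<Rightarrow> ('a,'k) vec set" where
  "eigsp \<omega> \<sigma> i = {x. \<sigma> x = sc (\<omega> ^ i) x}"

definition End_deg :: "nat \<Rightarrow> 'k::field \<Rightarrow> ('a,'k) op \<Rightarrow> nat \<Rightarrow> ('a,'k) op set" where
  "End_deg m \<omega> \<sigma> i = {T. lin T \<and> (\<forall>j<m. \<forall>x\<in>eigsp \<omega> \<sigma> j. T x \<in> eigsp \<omega> \<sigma> ((i + j) mod m))}"

definition ebas :: "'a \<Rightarrow> ('a,'k::field) vec" where
  "ebas a = Poly_Mapping.single a 1"

text \<open>x \<otimes> s in A \<otimes> S, where A \<otimes> S has basis 'a \<times> 'b.\<close>
definition tens :: "('a,'k::field) vec \<Rightarrow> ('b,'k) vec \<Rightarrow> ('a \<times> 'b,'k) vec" where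
  "tens x s = (\<Sum>l\<in>Poly_Mapping.keys x. \<Sum>r\<in>Poly_Mapping.keys s. Poly_Mapping.single (l,r) (Poly_Mapping.lookup x l * Poly_Mapping.lookup s r))"

text \<open>Product of the tensor product algebra: (x\<otimes>s)(y\<otimes>t) = xy \<otimes> st, bilinearly extended.\<close>
definition tmult :: "('a,'k::field) prod \<Rightarrow> ('b,'k) prod \<Rightarrow> ('a \<times> 'b,'k) prod" where
  "tmult MA MS u v = (\<Sum>(i,p)\<in>Poly_Mapping.keys u. \<Sum>(j,q)\<in>Poly_Mapping.keys v.
      sc (Poly_Mapping.lookup u (i,p) * Poly_Mapping.lookup v (j,q)) (tens (MA (ebas i) (ebas j)) (MS (ebas p) (ebas q))))"

definition optens :: "('a,'k::field) op \<Rightarrow> ('b,'k) op \<Rightarrow> ('a \<times> 'b,'k) op" where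
  "optens f g u = (\<Sum>(a,p)\<in>Poly_Mapping.keys u. sc (Poly_Mapping.lookup u (a,p)) (tens (f (ebas a)) (g (ebas p))))"

definition summable_fam :: "('i \<Rightarrow> ('a,'k::field) op) \<Rightarrow> bool" where
  "summable_fam F \<longleftrightarrow> (\<forall>v. finite {i. F i v \<noteq> 0})"

definition opsum :: "('i \<Rightarrow> ('a,'k::field) op) \<Rightarrow> ('a,'k) op" where
  "opsum F u = (\<Sum>i\<in>{i. F i u \<noteq> 0}. F i u)"

text \<open>E_V \<otimes>(left arrow) E_W.  A summable family on V with basis 'a has at most
|'a \<times> nat| nonzero members, so indexing by 'a \<times> nat loses no generality.\<close>
definition ltensor :: "('a,'k::field) op set \<Rightarrow> ('b,'k) op set \<Rightarrow> ('a \<times> 'b,'k) op set" where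
  "ltensor EV EW = {opsum (\<lambda>i. optens (f i) (g i)) | f g :: 'a \<times> nat \<Rightarrow> _.
      (\<forall>i. f i \<in> EV) \<and> (\<forall>i. g i \<in> EW) \<and> summable_fam f}"

text \<open>E_V \<otimes>(right arrow) E_W with respect to the basis B of E_V: the family is indexed
by the basis elements themselves.\<close>
definition rtensor :: "('a,'k::field) op set \<Rightarrow> ('b,'k) op set \<Rightarrow> ('a \<times> 'b,'k) op set" where
  "rtensor B EW = {opsum (\<lambda>\<gamma>. optens \<gamma> (g \<gamma>)) | g.
      (\<forall>\<gamma>\<in>B. g \<gamma> \<in> EW) \<and> (\<forall>\<gamma>. \<gamma> \<notin> B \<longrightarrow> g \<gamma> = (\<lambda>_. 0)) \<and> summable_fam g}"

definition is_basis :: "('a,'k::field) op set \<Rightarrow> ('a,'k) op set \<Rightarrow> bool" where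
  "is_basis E B \<longleftrightarrow> B \<subseteq> E
     \<and> (\<forall>F c. finite F \<and> F \<subseteq> B \<and> (\<lambda>x. \<Sum>f\<in>F. sc (c f) (f x)) = (\<lambda>x. 0) \<longrightarrow> (\<forall>f\<in>F. c f = 0))
     \<and> (\<forall>T\<in>E. \<exists>F c. finite F \<and> F \<subseteq> B \<and> T = (\<lambda>x. \<Sum>f\<in>F. sc (c f) (f x)))"

text \<open>S (or a subspace X of S) viewed inside End(S) by left multiplication.\<close>
definition Lset :: "('b,'k::field) prod \<Rightarrow> ('b,'k) vec set \<Rightarrow> ('b,'k) op set" where
  "Lset M X = {M s | s. s \<in> X}"

definition zsum :: "nat \<Rightarrow> (nat \<Rightarrow> ('a,'k::field) op set) \<Rightarrow> ('a,'k) op set" where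
  "zsum m E = {(\<lambda>u. \<Sum>k<m. T k u) | T. \<forall>k<m. T k \<in> E k}"

definition direct_sum :: "('a,'k::field) op set \<Rightarrow> ('a,'k) op set \<Rightarrow> ('a,'k) op set \<Rightarrow> bool" where
  "direct_sum D P Q \<longleftrightarrow> D = {(\<lambda>u. x u + y u) | x y. x \<in> P \<and> y \<in> Q} \<and> P \<inter> Q = {(\<lambda>u. 0)}"

text \<open>psi : C(A) \<otimes> S \<rightarrow> C(A \<otimes> S), \<gamma> \<otimes> s \<mapsto> \<gamma> \<otimes> L_s, is an isomorphism.
An element \<Sum> \<gamma>_i \<otimes> s_i of C(A) \<otimes> S is realised (injectively) as the map
a \<mapsto> \<Sum> \<gamma>_i(a) \<otimes> s_i from A to A \<otimes> S.\<close>
definition psi_iso :: "('a,'k::field) prod \<Rightarrow> ('b,'k) prod \<Rightarrow> bool" where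
  "psi_iso MA MS \<longleftrightarrow>
     (\<forall>\<gamma>\<in>centroid MA. \<forall>s. optens \<gamma> (MS s) \<in> centroid (tmult MA MS))
   \<and> (\<forall>ps. (\<forall>(\<gamma>,s)\<in>set ps. \<gamma> \<in> centroid MA) \<and>
          (\<lambda>u. sum_list (map (\<lambda>(\<gamma>,s). optens \<gamma> (MS s) u) ps)) = (\<lambda>u. 0)
          \<longrightarrow> (\<forall>a. sum_list (map (\<lambda>(\<gamma>,s). tens (\<gamma> a) s) ps) = 0))
   \<and> (\<forall>\<Gamma>\<in>centroid (tmult MA MS). \<exists>ps. (\<forall>(\<gamma>,s)\<in>set ps. \<gamma> \<in> centroid MA) \<and>
          \<Gamma> = (\<lambda>u. sum_list (map (\<lambda>(\<gamma>,s). optens \<gamma> (MS s) u) ps)))"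

end

theory Submission
  imports Defs "HOL-Computational_Algebra.Primes" "HOL-Library.Countable_Set"
begin


definition lm :: "(('a,'k::field) vec \<Rightarrow> ('c,'k) vec) \<Rightarrow> bool" where
  "lm f \<longleftrightarrow> (\<forall>x y. f (x + y) = f x + f y) \<and> (\<forall>r x. f (sc r x) = sc r (f x))"

lemma lin_lm: "lin T = lm T" by (simp add: lin_def lm_def)

lemma lookup_sc[simp]: "Poly_Mapping.lookup (sc r x) a = r * Poly_Mapping.lookup x a"
  by (simp add: sc_def map.rep_eq when_def)

lemma sc_0[simp]: "sc r 0 = 0" by (rule poly_mapping_eqI) simp
lemma sc_0'[simp]: "sc 0 x = 0" by (rule poly_mapping_eqI) simp
lemma sc_1[simp]: "sc 1 x = x" by (rule poly_mapping_eqI) simp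
lemma sc_sc[simp]: "sc a (sc b x) = sc (a*b) x" by (rule poly_mapping_eqI) simp
lemma sc_add: "sc a (x + y) = sc a x + sc a y" by (rule poly_mapping_eqI) (simp add: lookup_add algebra_simps)
lemma sc_add': "sc (a + b) x = sc a x + sc b x" by (rule poly_mapping_eqI) (simp add: lookup_add algebra_simps)
lemma sc_minus: "sc a (x - y) = sc a x - sc a y" by (rule poly_mapping_eqI) (simp add: lookup_minus algebra_simps)
lemma sc_uminus: "sc a (- y) = - sc a y" by (rule poly_mapping_eqI) (simp add: algebra_simps)
lemma sc_neg1: "sc (-1) y = - y" by (rule poly_mapping_eqI) (simp add: algebra_simps)
lemma sc_sum: "sc a (sum f A) = sum (\<lambda>i. sc a (f i)) A"
  by (rule poly_mapping_eqI) (simp add: lookup_sum sum_distrib_left)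
lemma sc_sum': "sc (sum f A) x = sum (\<lambda>i. sc (f i) x) A"
  by (rule poly_mapping_eqI) (simp add: lookup_sum sum_distrib_right)
lemma sc_eq0: "sc a x = 0 \<longleftrightarrow> a = 0 \<or> x = 0"
proof
  assume h: "sc a x = 0"
  show "a = 0 \<or> x = 0"
  proof (rule ccontr)
    assume "\<not> (a = 0 \<or> x = 0)"
    then have "sc (inverse a) (sc a x) = x" by simp
    with h show False using \<open>\<not> (a = 0 \<or> x = 0)\<close> by simp
  qed
qed auto
lemma sc_inv: "a \<noteq> 0 \<Longrightarrow> sc (inverse a) (sc a x) = x" by simp

lemma lm_0: "lm f \<Longrightarrow> f 0 = 0"
  by (metis lm_def sc_0')
lemma lm_add: "lm f \<Longrightarrow> f (x + y) = f x + f y" by (simp add: lm_def)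
lemma lm_sc: "lm f \<Longrightarrow> f (sc r x) = sc r (f x)" by (simp add: lm_def)
lemma lm_uminus: "lm f \<Longrightarrow> f (- x) = - f x"
  by (metis lm_sc sc_neg1)
lemma lm_diff: "lm f \<Longrightarrow> f (x - y) = f x - f y"
proof -
  assume h: "lm f"
  have "f (x - y) = f (x + (- y))" by simp
  also have "\<dots> = f x + - f y" using h by (simp only: lm_add lm_uminus)
  finally show ?thesis by simp
qed
lemma lm_sum: "lm f \<Longrightarrow> f (sum g A) = sum (\<lambda>i. f (g i)) A"
  by (induction A rule: infinite_finite_induct) (auto simp: lm_0 lm_add)
lemma lm_sum_list: "lm f \<Longrightarrow> f (sum_list xs) = sum_list (map f xs)"
  by (induction xs) (auto simp: lm_0 lm_add)

lemma lm_id[simp]: "lm (\<lambda>x. x)" by (simp add: lm_def)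
lemma lm_id'[simp]: "lm id" by (simp add: lm_def)
lemma lm_zero[simp]: "lm (\<lambda>x. 0)" by (simp add: lm_def)
lemma lm_comp: "lm f \<Longrightarrow> lm g \<Longrightarrow> lm (\<lambda>x. f (g x))" by (simp add: lm_def)
lemma lm_comp': "lm f \<Longrightarrow> lm g \<Longrightarrow> lm (f \<circ> g)" by (simp add: lm_def)
lemma lm_plus: "lm f \<Longrightarrow> lm g \<Longrightarrow> lm (\<lambda>x. f x + g x)" by (simp add: lm_def sc_add)
lemma lm_minus: "lm f \<Longrightarrow> lm g \<Longrightarrow> lm (\<lambda>x. f x - g x)" by (simp add: lm_def sc_minus)
lemma lm_scal: "lm f \<Longrightarrow> lm (\<lambda>x. sc r (f x))" by (simp add: lm_def sc_add mult.commute)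
lemma lm_sumf: "(\<And>i. i \<in> A \<Longrightarrow> lm (f i)) \<Longrightarrow> lm (\<lambda>x. \<Sum>i\<in>A. f i x)"
  unfolding lm_def by (auto simp: sum.distrib sc_sum)
lemma lm_pow: fixes f :: "('a,'k::field) op" shows "lm f \<Longrightarrow> lm (f ^^ n)"
proof (induction n)
  case (Suc n)
  have "lm (\<lambda>x. f ((f ^^ n) x))" by (rule lm_comp[OF Suc.prems Suc.IH[OF Suc.prems]])
  then show ?case by simp
qed simp



lemma lookup_ebas: "Poly_Mapping.lookup (ebas a) b = (if a = b then 1 else 0)"
  by (simp add: ebas_def lookup_single when_def)

lemma vec_expand: "x = (\<Sum>a\<in>Poly_Mapping.keys x. sc (Poly_Mapping.lookup x a) (ebas a))"
proof (rule poly_mapping_eqI)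
  fix b
  show "Poly_Mapping.lookup x b = Poly_Mapping.lookup (\<Sum>a\<in>Poly_Mapping.keys x. sc (Poly_Mapping.lookup x a) (ebas a)) b"
    by (simp add: lookup_sum lookup_ebas in_keys_iff if_distrib cong: if_cong)
qed

lemma keys_superset_sum:
  assumes "finite K" "Poly_Mapping.keys x \<subseteq> K"
  shows "(\<Sum>a\<in>Poly_Mapping.keys x. sc (Poly_Mapping.lookup x a) (T a)) = (\<Sum>a\<in>K. sc (Poly_Mapping.lookup x a) (T a))"
  by (rule sum.mono_neutral_left) (use assms in \<open>auto simp: in_keys_iff\<close>)

lemma lm_expand: "lm f \<Longrightarrow> f x = (\<Sum>a\<in>Poly_Mapping.keys x. sc (Poly_Mapping.lookup x a) (f (ebas a)))"
  by (subst vec_expand) (simp add: lm_sum lm_sc)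

lemma lm_ext: "lm f \<Longrightarrow> lm g \<Longrightarrow> (\<And>a. f (ebas a) = g (ebas a)) \<Longrightarrow> f = g"
  by (rule ext) (metis (no_types, lifting) lm_expand sum.cong)

lemma lookup_tens: "Poly_Mapping.lookup (tens x s) (a,p) = Poly_Mapping.lookup x a * Poly_Mapping.lookup s p"
proof -
  have "Poly_Mapping.lookup (tens x s) (a,p) =
    (\<Sum>l\<in>Poly_Mapping.keys x. \<Sum>r\<in>Poly_Mapping.keys s. if l = a \<and> r = p then Poly_Mapping.lookup x l * Poly_Mapping.lookup s r else 0)"
    by (simp add: tens_def lookup_sum lookup_single when_def)
  also have "\<dots> = (\<Sum>l\<in>Poly_Mapping.keys x. if l = a then Poly_Mapping.lookup x l * Poly_Mapping.lookup s p else 0)"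
    by (rule sum.cong) (auto simp: if_distrib[symmetric] in_keys_iff sum.delta cong: if_cong)
  also have "\<dots> = Poly_Mapping.lookup x a * Poly_Mapping.lookup s p"
    by (auto simp: in_keys_iff)
  finally show ?thesis .
qed

lemma lookup_tens': "Poly_Mapping.lookup (tens x s) q = Poly_Mapping.lookup x (fst q) * Poly_Mapping.lookup s (snd q)"
  by (cases q) (simp add: lookup_tens)

lemma tens_add1: "tens (x + y) s = tens x s + tens y s"
  by (rule poly_mapping_eqI) (simp add: lookup_tens' lookup_add algebra_simps)
lemma tens_add2: "tens x (s + t) = tens x s + tens x t"
  by (rule poly_mapping_eqI) (simp add: lookup_tens' lookup_add algebra_simps)
lemma tens_sc1: "tens (sc r x) s = sc r (tens x s)"
  by (rule poly_mapping_eqI) (simp add: lookup_tens' algebra_simps)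
lemma tens_sc2: "tens x (sc r s) = sc r (tens x s)"
  by (rule poly_mapping_eqI) (simp add: lookup_tens' algebra_simps)
lemma tens_01[simp]: "tens 0 s = 0"
  by (rule poly_mapping_eqI) (simp add: lookup_tens')
lemma tens_02[simp]: "tens x 0 = 0"
  by (rule poly_mapping_eqI) (simp add: lookup_tens')
lemma tens_minus1: "tens (x - y) s = tens x s - tens y s"
  by (rule poly_mapping_eqI) (simp add: lookup_tens' lookup_minus algebra_simps)
lemma tens_minus2: "tens x (s - t) = tens x s - tens x t"
  by (rule poly_mapping_eqI) (simp add: lookup_tens' lookup_minus algebra_simps)
lemma tens_sum1: "tens (sum f A) s = (\<Sum>i\<in>A. tens (f i) s)"
  by (rule poly_mapping_eqI) (simp add: lookup_tens' lookup_sum sum_distrib_right)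
lemma tens_sum2: "tens x (sum f A) = (\<Sum>i\<in>A. tens x (f i))"
  by (rule poly_mapping_eqI) (simp add: lookup_tens' lookup_sum sum_distrib_left)
lemma lm_tens1: "lm (\<lambda>x. tens x s)" by (simp add: lm_def tens_add1 tens_sc1)
lemma lm_tens2: "lm (\<lambda>s. tens x s)" by (simp add: lm_def tens_add2 tens_sc2)

lemma tens_ebas: "tens (ebas a) (ebas p) = Poly_Mapping.single (a,p) 1"
  by (rule poly_mapping_eqI) (auto simp: lookup_tens' lookup_ebas lookup_single when_def)

lemma ebas_pair: "ebas q = tens (ebas (fst q)) (ebas (snd q))"
  apply (cases q) apply (simp only: fst_conv snd_conv tens_ebas) apply (simp add: ebas_def) done

lemma lm_ext2:
  fixes f g :: "('a \<times> 'b, 'k::field) vec \<Rightarrow> ('c,'k) vec"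
  assumes "lm f" "lm g" "\<And>x s. f (tens x s) = g (tens x s)"
  shows "f = g"
  using assms by (intro lm_ext) (auto simp: ebas_pair)

lemma lm_ext2':
  fixes f g :: "('a \<times> 'b, 'k::field) vec \<Rightarrow> ('c,'k) vec"
  assumes "lm f" "lm g" "\<And>x s. f (tens x s) = g (tens x s)"
  shows "f u = g u"
  using lm_ext2[OF assms] by simp

lemma optens_alt: "optens f g u = (\<Sum>q\<in>Poly_Mapping.keys u. sc (Poly_Mapping.lookup u q) (tens (f (ebas (fst q))) (g (ebas (snd q)))))"
  by (simp add: optens_def case_prod_beta)

lemma optens_super: "finite K \<Longrightarrow> Poly_Mapping.keys u \<subseteq> K \<Longrightarrow>
   optens f g u = (\<Sum>q\<in>K. sc (Poly_Mapping.lookup u q) (tens (f (ebas (fst q))) (g (ebas (snd q)))))"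
  unfolding optens_alt by (rule keys_superset_sum)

lemma keys_add_sub: "Poly_Mapping.keys (u + v) \<subseteq> Poly_Mapping.keys u \<union> Poly_Mapping.keys v"
  by (simp add: keys_add)

lemma keys_sc_sub: "Poly_Mapping.keys (sc r u) \<subseteq> Poly_Mapping.keys u"
  by (auto simp: in_keys_iff)

lemma lm_optens: fixes f :: "('a,'k::field) op" and g :: "('b,'k) op" shows "lm (optens f g)"
proof -
  { fix u v :: "('a \<times> 'b,'k) vec"
    let ?K = "Poly_Mapping.keys u \<union> Poly_Mapping.keys v"
    have "optens f g (u + v) = optens f g u + optens f g v"
      apply (subst optens_super[of ?K], simp, rule order_trans[OF keys_add_sub], simp)
      apply (subst optens_super[of ?K u], simp, simp)
      apply (subst optens_super[of ?K v], simp, simp)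
      by (simp add: lookup_add sc_add' sum.distrib) }
  moreover
  { fix r and u :: "('a \<times> 'b,'k) vec"
    have "optens f g (sc r u) = sc r (optens f g u)"
      apply (subst optens_super[of "Poly_Mapping.keys u"], simp, rule keys_sc_sub)
      by (simp add: optens_alt sc_sum) }
  ultimately show ?thesis by (simp add: lm_def)
qed

lemma optens_tens:
  assumes "lm f" "lm g"
  shows "optens f g (tens x s) = tens (f x) (g s)"
proof -
  let ?K = "Poly_Mapping.keys x \<times> Poly_Mapping.keys s"
  have "optens f g (tens x s) = (\<Sum>q\<in>?K. sc (Poly_Mapping.lookup (tens x s) q) (tens (f (ebas (fst q))) (g (ebas (snd q)))))"
    by (rule optens_super) (auto simp: in_keys_iff lookup_tens')
  also have "\<dots> = (\<Sum>a\<in>Poly_Mapping.keys x. \<Sum>p\<in>Poly_Mapping.keys s. tens (sc (Poly_Mapping.lookup x a) (f (ebas a))) (sc (Poly_Mapping.lookup s p) (g (ebas p))))"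
    by (simp add: sum.cartesian_product lookup_tens' tens_sc1 tens_sc2 mult.commute case_prod_beta)
  also have "\<dots> = tens (f x) (g s)"
    by (simp add: lm_expand[OF assms(1), of x] lm_expand[OF assms(2), of s] tens_sum1 tens_sum2 sum.swap[of _ "Poly_Mapping.keys s"])
  finally show ?thesis .
qed



lemma lm_csum: fixes W :: "'a \<Rightarrow> ('c,'k::field) vec" shows "lm (\<lambda>u. \<Sum>q\<in>Poly_Mapping.keys u. sc (Poly_Mapping.lookup u q) (W q))"
proof -
  { fix u v :: "('a,'k) vec"
    let ?K = "Poly_Mapping.keys u \<union> Poly_Mapping.keys v"
    have "(\<Sum>q\<in>Poly_Mapping.keys (u+v). sc (Poly_Mapping.lookup (u+v) q) (W q)) =
      (\<Sum>q\<in>?K. sc (Poly_Mapping.lookup (u+v) q) (W q))"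
      by (rule keys_superset_sum) (auto dest: set_mp[OF keys_add_sub])
    also have "\<dots> = (\<Sum>q\<in>?K. sc (Poly_Mapping.lookup u q) (W q)) + (\<Sum>q\<in>?K. sc (Poly_Mapping.lookup v q) (W q))"
      by (simp add: lookup_add sc_add' sum.distrib)
    also have "\<dots> = (\<Sum>q\<in>Poly_Mapping.keys u. sc (Poly_Mapping.lookup u q) (W q)) + (\<Sum>q\<in>Poly_Mapping.keys v. sc (Poly_Mapping.lookup v q) (W q))"
      by (simp add: keys_superset_sum[of ?K u W] keys_superset_sum[of ?K v W])
    finally have "(\<Sum>q\<in>Poly_Mapping.keys (u+v). sc (Poly_Mapping.lookup (u+v) q) (W q)) =
       (\<Sum>q\<in>Poly_Mapping.keys u. sc (Poly_Mapping.lookup u q) (W q)) + (\<Sum>q\<in>Poly_Mapping.keys v. sc (Poly_Mapping.lookup v q) (W q))" . }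
  moreover
  { fix r and u :: "('a,'k) vec"
    have "(\<Sum>q\<in>Poly_Mapping.keys (sc r u). sc (Poly_Mapping.lookup (sc r u) q) (W q)) =
      (\<Sum>q\<in>Poly_Mapping.keys u. sc (Poly_Mapping.lookup (sc r u) q) (W q))"
      by (rule keys_superset_sum) (auto intro: set_mp[OF keys_sc_sub])
    also have "\<dots> = sc r (\<Sum>q\<in>Poly_Mapping.keys u. sc (Poly_Mapping.lookup u q) (W q))"
      by (simp add: sc_sum)
    finally have "(\<Sum>q\<in>Poly_Mapping.keys (sc r u). sc (Poly_Mapping.lookup (sc r u) q) (W q)) =
      sc r (\<Sum>q\<in>Poly_Mapping.keys u. sc (Poly_Mapping.lookup u q) (W q))" . }
  ultimately show ?thesis unfolding lm_def by blast
qed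

lemma tmult_alt1: "tmult MA MS u v = (\<Sum>q\<in>Poly_Mapping.keys u. sc (Poly_Mapping.lookup u q)
   (\<Sum>q'\<in>Poly_Mapping.keys v. sc (Poly_Mapping.lookup v q') (tens (MA (ebas (fst q)) (ebas (fst q'))) (MS (ebas (snd q)) (ebas (snd q'))))))"
  by (simp add: tmult_def case_prod_beta sc_sum)

lemma tmult_alt2: "tmult MA MS u v = (\<Sum>q'\<in>Poly_Mapping.keys v. sc (Poly_Mapping.lookup v q')
   (\<Sum>q\<in>Poly_Mapping.keys u. sc (Poly_Mapping.lookup u q) (tens (MA (ebas (fst q)) (ebas (fst q'))) (MS (ebas (snd q)) (ebas (snd q'))))))"
  unfolding tmult_def case_prod_beta sc_sum sc_sc
  by (subst sum.swap) (simp add: mult.commute)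

lemma lm_tmult1: "lm (\<lambda>u. tmult MA MS u v)"
  unfolding tmult_alt1 by (rule lm_csum)
lemma lm_tmult2: "lm (tmult MA MS u)"
  unfolding tmult_alt2[abs_def] by (rule lm_csum)

lemma bilin_lm1: "bilin M \<Longrightarrow> lm (\<lambda>x. M x y)" by (simp add: bilin_def lin_lm)
lemma bilin_lm2: "bilin M \<Longrightarrow> lm (M x)" by (simp add: bilin_def lin_lm)

lemma bilin_tmult: "bilin (tmult MA MS)"
  by (simp add: bilin_def lin_lm lm_tmult1 lm_tmult2)

lemma keys_ebas: "Poly_Mapping.keys (ebas q) = {q}"
  by (simp add: ebas_def)

lemma tens_ebas_eq: "tens (ebas i) (ebas p) = ebas (i,p)"
  by (simp add: ebas_pair[of "(i,p)"])

lemma tmult_ebas: "tmult MA MS (tens (ebas i) (ebas p)) (tens (ebas j) (ebas q)) = tens (MA (ebas i) (ebas j)) (MS (ebas p) (ebas q))"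
  by (simp add: tens_ebas_eq tmult_alt1 keys_ebas lookup_ebas)

lemma tmult_tens:
  assumes A: "bilin MA" and S: "bilin MS"
  shows "tmult MA MS (tens x s) (tens y t) = tens (MA x y) (MS s t)"
proof -
  have s1: "tmult MA MS (tens (ebas i) (ebas p)) (tens (ebas j) t) = tens (MA (ebas i) (ebas j)) (MS (ebas p) t)" for i p j t
  proof -
    have "(\<lambda>t. tmult MA MS (tens (ebas i) (ebas p)) (tens (ebas j) t)) = (\<lambda>t. tens (MA (ebas i) (ebas j)) (MS (ebas p) t))"
      by (rule lm_ext) (auto intro: lm_comp[OF lm_tmult2 lm_tens2] lm_comp[OF lm_tens2 bilin_lm2[OF S]] simp: tmult_ebas)
    then show ?thesis by (rule fun_cong)
  qed
  have s2: "tmult MA MS (tens (ebas i) (ebas p)) (tens y t) = tens (MA (ebas i) y) (MS (ebas p) t)" for i p y t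
  proof -
    have "(\<lambda>y. tmult MA MS (tens (ebas i) (ebas p)) (tens y t)) = (\<lambda>y. tens (MA (ebas i) y) (MS (ebas p) t))"
      by (rule lm_ext) (auto intro: lm_comp[OF lm_tmult2 lm_tens1] lm_comp[OF lm_tens1 bilin_lm2[OF A]] simp: s1)
    then show ?thesis by (rule fun_cong)
  qed
  have s3: "tmult MA MS (tens (ebas i) s) (tens y t) = tens (MA (ebas i) y) (MS s t)" for i s y t
  proof -
    have "(\<lambda>s. tmult MA MS (tens (ebas i) s) (tens y t)) = (\<lambda>s. tens (MA (ebas i) y) (MS s t))"
      by (rule lm_ext) (auto intro: lm_comp[OF lm_tmult1 lm_tens2] lm_comp[OF lm_tens2 bilin_lm1[OF S]] simp: s2)
    then show ?thesis by (rule fun_cong)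
  qed
  have "(\<lambda>x. tmult MA MS (tens x s) (tens y t)) = (\<lambda>x. tens (MA x y) (MS s t))"
    by (rule lm_ext) (auto intro: lm_comp[OF lm_tmult1 lm_tens1] lm_comp[OF lm_tens1 bilin_lm1[OF A]] simp: s3)
  then show ?thesis by (rule fun_cong)
qed

lemma bil_ext:
  fixes \<Phi> \<Psi> :: "('a \<times> 'b, 'k::field) vec \<Rightarrow> ('a \<times> 'b, 'k) vec \<Rightarrow> ('c,'k) vec"
  assumes "\<And>v. lm (\<lambda>u. \<Phi> u v)" "\<And>u. lm (\<Phi> u)" "\<And>v. lm (\<lambda>u. \<Psi> u v)" "\<And>u. lm (\<Psi> u)"
    and "\<And>x s y t. \<Phi> (tens x s) (tens y t) = \<Psi> (tens x s) (tens y t)"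
  shows "\<Phi> u v = \<Psi> u v"
proof -
  have "\<Phi> u (tens y t) = \<Psi> u (tens y t)" for y t
    by (rule lm_ext2'[of "\<lambda>u. \<Phi> u (tens y t)" "\<lambda>u. \<Psi> u (tens y t)"]) (use assms in auto)
  then show ?thesis
    by (rule lm_ext2'[of "\<Phi> u" "\<Psi> u", OF assms(2) assms(4)])
qed

lemma optens_comp:
  assumes "lm f" "lm g" "lm f'" "lm g'"
  shows "optens f g (optens f' g' u) = optens (\<lambda>x. f (f' x)) (\<lambda>x. g (g' x)) u"
  by (rule lm_ext2'[of "\<lambda>u. optens f g (optens f' g' u)"])
     (auto intro: lm_comp lm_optens simp: optens_tens assms lm_comp)

lemma optens_id: "optens (\<lambda>x. x) (\<lambda>x. x) u = u"
  by (rule lm_ext2'[of "optens (\<lambda>x. x) (\<lambda>x. x)" "\<lambda>u. u"]) (auto intro: lm_optens simp: optens_tens)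

lemma optens_sum1: "optens (\<lambda>x. \<Sum>i\<in>A. f i x) g u = (\<Sum>i\<in>A. optens (f i) g u)"
  by (simp add: optens_alt tens_sum1 sc_sum) (rule sum.swap)
lemma optens_sum2: "optens f (\<lambda>x. \<Sum>i\<in>A. g i x) u = (\<Sum>i\<in>A. optens f (g i) u)"
  by (simp add: optens_alt tens_sum2 sc_sum) (rule sum.swap)
lemma optens_add1: "optens (\<lambda>x. f x + f' x) g u = optens f g u + optens f' g u"
  by (simp add: optens_alt tens_add1 sc_add sum.distrib)
lemma optens_add2: "optens f (\<lambda>x. g x + g' x) u = optens f g u + optens f g' u"
  by (simp add: optens_alt tens_add2 sc_add sum.distrib)
lemma optens_sc1: "optens (\<lambda>x. sc r (f x)) g u = sc r (optens f g u)"
  by (simp add: optens_alt tens_sc1 sc_sum mult.commute)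
lemma optens_sc2: "optens f (\<lambda>x. sc r (g x)) u = sc r (optens f g u)"
  by (simp add: optens_alt tens_sc2 sc_sum mult.commute)
lemma optens_01[simp]: "optens (\<lambda>x. 0) g u = 0"
  by (simp add: optens_alt)
lemma optens_02[simp]: "optens f (\<lambda>x. 0) u = 0"
  by (simp add: optens_alt)

lemma optens_zero_on:
  assumes "\<And>q. q \<in> Poly_Mapping.keys u \<Longrightarrow> tens (f (ebas (fst q))) (g (ebas (snd q))) = 0"
  shows "optens f g u = 0"
  by (simp add: optens_alt assms)

lemma aut_lm: "automorphism M \<sigma> \<Longrightarrow> lm \<sigma>" by (simp add: automorphism_def lin_lm)
lemma der_lm: "d \<in> derivations M \<Longrightarrow> lm d" by (simp add: derivations_def lin_lm)
lemma cen_lm: "d \<in> centroid M \<Longrightarrow> lm d" by (simp add: centroid_def lin_lm)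

lemma optens_pow:
  assumes "lm f" "lm g"
  shows "(optens f g ^^ n) u = optens (f ^^ n) (g ^^ n) u"
proof (induction n arbitrary: u)
  case 0 then show ?case by (simp add: optens_id[unfolded id_def])
next
  case (Suc n)
  have "(optens f g ^^ Suc n) u = optens f g (optens (f ^^ n) (g ^^ n) u)" by (simp add: Suc)
  also have "\<dots> = optens (f ^^ Suc n) (g ^^ Suc n) u"
    by (simp add: optens_comp assms lm_pow o_def)
  finally show ?case .
qed



lemma mod_arith1:
  fixes m c c' :: nat
  assumes "0 < m" "c < m" "c' < m"
  shows "((m - 1) * c + c') mod m = 0 \<longleftrightarrow> c = c'"
proof -
  have e: "(m - 1) * c + c' + c = m * c + c'" using assms(1)
    by (cases m) (auto simp: algebra_simps)
  show ?thesis
  proof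
    assume h: "((m - 1) * c + c') mod m = 0"
    have "((m - 1) * c + c' + c) mod m = c mod m"
      using h by (metis add.commute add_0 mod_add_left_eq)
    then have "(m * c + c') mod m = c mod m" by (simp only: e)
    then have "c' mod m = c mod m" by simp
    then show "c = c'" using assms by simp
  next
    assume "c = c'"
    then have "(m - 1) * c + c' = m * c" using e by simp
    then show "((m - 1) * c + c') mod m = 0" by simp
  qed
qed

lemma mod_arith2:
  fixes m a b j :: nat
  assumes "0 < m" "b < m"
  shows "(((a + b) mod m + j) mod m + m - b) mod m = (a + j) mod m"
proof -
  have "(((a + b) mod m + j) mod m + m - b) mod m = (((a + b) mod m + j) mod m + (m - b)) mod m"
    using assms by simp
  also have "\<dots> = ((a + b) + j + (m - b)) mod m"
    by (metis mod_add_left_eq)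
  also have "(a + b) + j + (m - b) = (a + j) + m" using assms by simp
  finally show ?thesis by simp
qed

lemma bij_shift: "0 < m \<Longrightarrow> bij_betw (\<lambda>j. (c + j) mod (m::nat)) {..<m} {..<m}"
proof -
  assume m: "0 < m"
  have inj: "inj_on (\<lambda>j. (c + j) mod m) {..<m}"
  proof (rule inj_onI)
    fix x y assume "x \<in> {..<m}" "y \<in> {..<m}" "(c + x) mod m = (c + y) mod m"
    then show "x = y"
    proof (induction x y rule: linorder_wlog)
      case (le a b)
      then have "m dvd (c + b) - (c + a)" by (metis mod_eq_dvd_iff_nat add_le_mono1 add.commute)
      then have "m dvd b - a" by simp
      moreover have "b - a < m" using le by auto
      ultimately show ?case using le by (metis dvd_imp_le diff_is_0_eq le_antisym neq0_conv not_le)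
    next
      case (sym a b) then show ?case by metis
    qed
  qed
  moreover have "(\<lambda>j. (c + j) mod m) ` {..<m} = {..<m}"
    by (rule endo_inj_surj) (use inj m in auto)
  ultimately show ?thesis by (simp add: bij_betw_def)
qed

lemma sum_shift: "0 < m \<Longrightarrow> (\<Sum>j<m. f ((c + j) mod m)) = (\<Sum>j<(m::nat). f j)"
  using sum.reindex_bij_betw[OF bij_shift[of m c], of f] by simp

locale grading =
  fixes m :: nat and \<omega> :: "'k::field" and \<sigma> :: "('a,'k) op"
  assumes m_pos: "0 < m" and root: "\<omega> ^ m = 1"
    and primitive: "\<forall>i. 0 < i \<and> i < m \<longrightarrow> \<omega> ^ i \<noteq> 1"
    and lm_sigma: "lm \<sigma>" and per: "\<sigma> ^^ m = id"
begin

lemma omega_mod: "\<omega> ^ n = \<omega> ^ (n mod m)"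
proof -
  have "\<omega> ^ n = \<omega> ^ (m * (n div m)) * \<omega> ^ (n mod m)" by (simp add: power_add[symmetric])
  also have "\<omega> ^ (m * (n div m)) = 1" by (simp add: power_mult root)
  finally show ?thesis by simp
qed

lemma omega_eq1: "\<omega> ^ n = 1 \<longleftrightarrow> n mod m = 0"
  using primitive m_pos omega_mod[of n] by (metis mod_less_divisor neq0_conv power_0)

lemma omega_nz: "\<omega> \<noteq> 0" using root m_pos by (cases m) auto

lemma m_nz: "of_nat m \<noteq> (0::'k)"
proof
  assume h: "of_nat m = (0::'k)"
  then have dv: "CHAR('k) dvd m" by (simp add: of_nat_eq_0_iff_char_dvd)
  have cp: "CHAR('k) > 0" using h m_pos CHAR_pos_iff by blast
  then have pr: "prime CHAR('k)" by (rule prime_CHAR_semidom)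
  define p where "p = CHAR('k)"
  define q where "q = m div p"
  have pq: "m = p * q" using dv by (simp add: p_def q_def)
  have p1: "p > 1" using pr p_def prime_gt_1_nat by blast
  have q0: "0 < q" using pq m_pos by (cases q) auto
  have qm: "q < m" using pq p1 q0 by simp
  have y: "(\<omega> ^ q) ^ p = 1" using root pq by (simp add: power_mult[symmetric] mult.commute)
  have "(\<omega> ^ q + (- 1)) ^ p = (\<omega> ^ q) ^ p + (- 1) ^ p"
    by (rule freshmans_dream) (use pr p_def in auto)
  also have "(- 1 :: 'k) ^ p = - (1 ^ p)"
    by (rule minus_power_prime_CHAR) (use pr p_def in auto)
  finally have "(\<omega> ^ q - 1) ^ p = 0" using y by simp
  then have "\<omega> ^ q = 1" by simp
  then show False using primitive q0 qm by blast
qed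

lemma geo: "(\<Sum>l<m. (\<omega> ^ e) ^ l) = (if e mod m = 0 then of_nat m else 0)"
proof (cases "e mod m = 0")
  case True
  then have "\<omega> ^ e = 1" using omega_eq1 by simp
  then show ?thesis using True by simp
next
  case False
  then have ne: "\<omega> ^ e \<noteq> 1" using omega_eq1 by simp
  have "(\<omega> ^ e) ^ m = 1" by (simp add: power_mult[symmetric] mult.commute[of e] power_mult root)
  then have "(\<omega> ^ e - 1) * (\<Sum>l<m. (\<omega> ^ e) ^ l) = 0"
    by (simp add: power_diff_1_eq[of "\<omega> ^ e" m, symmetric])
  then show ?thesis using ne False by simp
qed

definition proj :: "nat \<Rightarrow> ('a,'k) op" where
  "proj c x = sc (inverse (of_nat m)) (\<Sum>l<m. sc (\<omega> ^ ((m - 1) * c * l)) ((\<sigma> ^^ l) x))"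

abbreviation V where "V c \<equiv> eigsp \<omega> \<sigma> c"

lemma V_iff: "x \<in> V c \<longleftrightarrow> \<sigma> x = sc (\<omega> ^ c) x" by (simp add: eigsp_def)

lemma V_mod: "V c = V (c mod m)"
  by (auto simp: eigsp_def omega_mod[of c])

lemma V_0[simp]: "0 \<in> V c" by (simp add: V_iff lm_0[OF lm_sigma])
lemma V_add: "x \<in> V c \<Longrightarrow> y \<in> V c \<Longrightarrow> x + y \<in> V c"
  by (simp add: V_iff lm_add[OF lm_sigma] sc_add)
lemma V_sc: "x \<in> V c \<Longrightarrow> sc r x \<in> V c"
  by (simp add: V_iff lm_sc[OF lm_sigma] mult.commute)
lemma V_sum: "(\<And>i. i \<in> A \<Longrightarrow> f i \<in> V c) \<Longrightarrow> sum f A \<in> V c"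
  by (induction A rule: infinite_finite_induct) (auto intro: V_add)

lemma pow_V: "x \<in> V c \<Longrightarrow> (\<sigma> ^^ l) x = sc (\<omega> ^ (c * l)) x"
proof (induction l)
  case (Suc l)
  then show ?case by (simp add: lm_sc[OF lm_sigma] V_iff power_add mult.commute)
qed simp

lemma lm_proj: "lm (proj c)"
  unfolding proj_def[abs_def]
  by (rule lm_scal, rule lm_sumf, rule lm_scal, rule lm_pow, rule lm_sigma)

lemma proj_V: "proj c x \<in> V c"
proof -
  define F where "F l = sc (\<omega> ^ c * \<omega> ^ ((m - 1) * c * l)) ((\<sigma> ^^ l) x)" for l
  have w: "\<omega> ^ ((m - 1) * c * l) = \<omega> ^ c * \<omega> ^ ((m - 1) * c * Suc l)" for l
  proof -
    have g: "c + k * c * Suc l = k * c * l + Suc k * c" for k by (simp add: algebra_simps)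
    have "Suc (m - 1) = m" using m_pos by simp
    then have E: "c + (m - 1) * c * Suc l = (m - 1) * c * l + m * c" using g[of "m - 1"] by simp
    have "\<omega> ^ c * \<omega> ^ ((m - 1) * c * Suc l) = \<omega> ^ (c + (m - 1) * c * Suc l)" by (rule power_add[symmetric])
    also have "\<dots> = \<omega> ^ ((m - 1) * c * l + m * c)" by (simp only: E)
    also have "\<dots> = \<omega> ^ ((m - 1) * c * l) * (\<omega> ^ m) ^ c" by (simp only: power_add power_mult)
    finally show ?thesis by (simp add: root)
  qed
  have Fm: "F m = F 0"
  proof -
    have "\<omega> ^ ((m - 1) * c * m) = 1" by (simp add: mult.commute[of _ m] power_mult root)
    then show ?thesis by (simp add: F_def per)
  qed
  have "(\<Sum>l<m. sc (\<omega> ^ ((m - 1) * c * l)) ((\<sigma> ^^ Suc l) x)) = (\<Sum>l<m. F (Suc l))"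
  proof (rule sum.cong[OF refl])
    fix l show "sc (\<omega> ^ ((m - 1) * c * l)) ((\<sigma> ^^ Suc l) x) = F (Suc l)"
      unfolding F_def by (subst w[of l]) (rule refl)
  qed
  also have "\<dots> = (\<Sum>l<m. F l)"
  proof -
    have "(\<Sum>l<Suc m. F l) = F 0 + (\<Sum>l<m. F (Suc l))" by (rule sum.lessThan_Suc_shift)
    moreover have "(\<Sum>l<Suc m. F l) = (\<Sum>l<m. F l) + F m" by simp
    ultimately show ?thesis using Fm by (simp add: add.commute)
  qed
  also have "\<dots> = sc (\<omega> ^ c) (\<Sum>l<m. sc (\<omega> ^ ((m - 1) * c * l)) ((\<sigma> ^^ l) x))"
    by (simp add: F_def sc_sum)
  finally have *: "(\<Sum>l<m. sc (\<omega> ^ ((m - 1) * c * l)) ((\<sigma> ^^ Suc l) x)) = sc (\<omega> ^ c) (\<Sum>l<m. sc (\<omega> ^ ((m - 1) * c * l)) ((\<sigma> ^^ l) x))" .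
  have "\<sigma> (proj c x) = sc (inverse (of_nat m)) (\<Sum>l<m. sc (\<omega> ^ ((m - 1) * c * l)) ((\<sigma> ^^ Suc l) x))"
    by (simp add: proj_def lm_sc[OF lm_sigma] lm_sum[OF lm_sigma])
  also have "\<dots> = sc (\<omega> ^ c) (proj c x)" unfolding * proj_def by (simp add: mult.commute)
  finally show ?thesis by (simp add: V_iff)
qed

lemma proj_eig: assumes "x \<in> V c'" "c < m" "c' < m"
  shows "proj c x = (if c = c' then x else 0)"
proof -
  have pw: "(\<omega> ^ ((m - 1) * c + c')) ^ l = \<omega> ^ ((m - 1) * c * l) * \<omega> ^ (c' * l)" for l
  proof -
    have "(\<omega> ^ ((m - 1) * c + c')) ^ l = \<omega> ^ (((m - 1) * c + c') * l)" by (rule power_mult[symmetric])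
    also have "\<dots> = \<omega> ^ ((m - 1) * c * l + c' * l)" by (simp only: add_mult_distrib)
    also have "\<dots> = \<omega> ^ ((m - 1) * c * l) * \<omega> ^ (c' * l)" by (rule power_add)
    finally show ?thesis .
  qed
  have "proj c x = sc (inverse (of_nat m)) (\<Sum>l<m. sc ((\<omega> ^ ((m - 1) * c + c')) ^ l) x)"
    unfolding proj_def pw by (simp add: pow_V[OF assms(1)] mult.commute)
  also have "\<dots> = sc (inverse (of_nat m) * (\<Sum>l<m. (\<omega> ^ ((m - 1) * c + c')) ^ l)) x"
    by (simp add: sc_sum'[symmetric])
  also have "\<dots> = (if c = c' then x else 0)"
    using mod_arith1[OF m_pos assms(2,3)] by (simp add: geo m_nz)
  finally show ?thesis .
qed

lemma proj_sum: "(\<Sum>c<m. proj c x) = x"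
proof -
  have "(\<Sum>c<m. proj c x) = sc (inverse (of_nat m)) (\<Sum>l<m. sc (\<Sum>c<m. (\<omega> ^ ((m - 1) * l)) ^ c) ((\<sigma> ^^ l) x))"
  proof -
    have "(\<Sum>c<m. proj c x) = sc (inverse (of_nat m)) (\<Sum>c<m. \<Sum>l<m. sc (\<omega> ^ ((m - 1) * c * l)) ((\<sigma> ^^ l) x))"
      by (simp add: proj_def sc_sum)
    also have "\<dots> = sc (inverse (of_nat m)) (\<Sum>l<m. \<Sum>c<m. sc (\<omega> ^ ((m - 1) * c * l)) ((\<sigma> ^^ l) x))"
      by (subst sum.swap) (rule refl)
    also have "\<dots> = sc (inverse (of_nat m)) (\<Sum>l<m. sc (\<Sum>c<m. (\<omega> ^ ((m - 1) * l)) ^ c) ((\<sigma> ^^ l) x))"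
    proof -
      have "\<omega> ^ ((m - 1) * c * l) = (\<omega> ^ ((m - 1) * l)) ^ c" for c l
        by (simp add: power_mult[symmetric] mult.commute mult.left_commute)
      then show ?thesis by (simp add: sc_sum')
    qed
    finally show ?thesis .
  qed
  also have "\<dots> = sc (inverse (of_nat m)) (\<Sum>l<m. if l = 0 then sc (of_nat m) x else 0)"
  proof -
    have "(\<Sum>c<m. (\<omega> ^ ((m - 1) * l)) ^ c) = (if l = 0 then of_nat m else 0)" if "l < m" for l
      using mod_arith1[OF m_pos that, of 0] that m_pos by (simp add: geo)
    then show ?thesis by (intro arg_cong[where f="sc _"] sum.cong) auto
  qed
  also have "\<dots> = x" using m_pos m_nz by simp
  finally show ?thesis .
qed

lemma proj_comp_sum: "lm T \<Longrightarrow> T x = (\<Sum>c<m. T (proj c x))"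
  by (metis lm_sum proj_sum)

lemma sigma_proj: "\<sigma> (proj c x) = sc (\<omega> ^ c) (proj c x)"
  using proj_V V_iff by blast

lemma proj_unique:
  assumes "\<And>c. c < m \<Longrightarrow> y c \<in> V c" "c' < m"
  shows "proj c' (\<Sum>c<m. y c) = y c'"
proof -
  have "proj c' (\<Sum>c<m. y c) = (\<Sum>c<m. proj c' (y c))" by (simp add: lm_sum[OF lm_proj])
  also have "\<dots> = (\<Sum>c<m. if c' = c then y c else 0)"
    by (rule sum.cong) (auto simp: proj_eig assms)
  also have "\<dots> = y c'" using assms(2) by simp
  finally show ?thesis .
qed

definition comp :: "('a,'k) op \<Rightarrow> nat \<Rightarrow> ('a,'k) op" where
  "comp T j x = (\<Sum>c<m. proj ((c + j) mod m) (T (proj c x)))"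

lemma lm_comp_op: assumes "lm T" shows "lm (comp T j)"
  unfolding comp_def[abs_def]
  by (rule lm_sumf, rule lm_comp[OF lm_proj lm_comp[OF assms lm_proj]])

lemma comp_hom: assumes "lm T" "x \<in> V c'" "c' < m"
  shows "comp T j x = proj ((c' + j) mod m) (T x)"
proof -
  have "comp T j x = (\<Sum>c<m. if c = c' then proj ((c + j) mod m) (T x) else 0)"
    unfolding comp_def
  proof (rule sum.cong[OF refl])
    fix c assume "c \<in> {..<m}"
    then have "proj c x = (if c = c' then x else 0)" using proj_eig[OF assms(2) _ assms(3)] by simp
    then show "proj ((c + j) mod m) (T (proj c x)) = (if c = c' then proj ((c + j) mod m) (T x) else 0)"
      by (simp add: lm_0[OF assms(1)] lm_0[OF lm_proj])
  qed
  then show ?thesis using assms by simp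
qed

lemma End_deg_iff: "T \<in> End_deg m \<omega> \<sigma> j \<longleftrightarrow> lm T \<and> (\<forall>c<m. \<forall>x\<in>V c. T x \<in> V ((j + c) mod m))"
  by (simp add: End_deg_def lin_lm)

lemma comp_End: assumes "lm T" shows "comp T j \<in> End_deg m \<omega> \<sigma> j"
  unfolding End_deg_iff
  using lm_comp_op[OF assms] comp_hom[OF assms] proj_V by (simp add: add.commute)

lemma comp_sum: assumes "lm T" shows "(\<Sum>j<m. comp T j x) = T x"
proof -
  have "(\<Sum>j<m. comp T j x) = (\<Sum>c<m. \<Sum>j<m. proj ((c + j) mod m) (T (proj c x)))"
    unfolding comp_def by (rule sum.swap)
  also have "\<dots> = (\<Sum>c<m. \<Sum>j<m. proj j (T (proj c x)))"
    by (rule sum.cong) (auto simp: sum_shift[OF m_pos, of "\<lambda>j. proj j _"])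
  also have "\<dots> = (\<Sum>c<m. T (proj c x))" by (simp add: proj_sum)
  also have "\<dots> = T x" by (simp add: proj_comp_sum[OF assms, symmetric])
  finally show ?thesis .
qed

lemma End_hom: "T \<in> End_deg m \<omega> \<sigma> j \<Longrightarrow> x \<in> V c \<Longrightarrow> c < m \<Longrightarrow> T x \<in> V ((j + c) mod m)"
  by (simp add: End_deg_iff)

lemma End_lm: "T \<in> End_deg m \<omega> \<sigma> j \<Longrightarrow> lm T"
  by (simp add: End_deg_iff)

lemma comp_unique:
  assumes Z: "\<And>j. j < m \<Longrightarrow> Z j \<in> End_deg m \<omega> \<sigma> j" and T: "\<And>x. T x = (\<Sum>j<m. Z j x)" and j: "j < m"
  shows "comp T j x = Z j x"
proof -
  have "comp T j x = (\<Sum>c<m. \<Sum>j'<m. proj ((c + j) mod m) (Z j' (proj c x)))"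
    unfolding comp_def T by (simp add: lm_sum[OF lm_proj])
  also have "\<dots> = (\<Sum>c<m. \<Sum>j'<m. if j' = j then Z j (proj c x) else 0)"
  proof (intro sum.cong refl)
    fix c j' assume c: "c \<in> {..<m}" and j': "j' \<in> {..<m}"
    have inV: "Z j' (proj c x) \<in> V ((j' + c) mod m)" using End_hom[OF Z proj_V] c j' by simp
    have inj: "inj_on (\<lambda>j. (c + j) mod m) {..<m}" using bij_betw_imp_inj_on[OF bij_shift[OF m_pos, of c]] .
    have "(j' + c) mod m = (c + j') mod m" by (simp only: add.commute)
    moreover have "((c + j) mod m = (c + j') mod m) = (j' = j)"
      using inj c j' j unfolding inj_on_def by blast
    ultimately have "((c + j) mod m = (j' + c) mod m) = (j' = j)" by simp
    then show "proj ((c + j) mod m) (Z j' (proj c x)) = (if j' = j then Z j (proj c x) else 0)"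
      using proj_eig[OF inV] m_pos by auto
  qed
  also have "\<dots> = (\<Sum>c<m. Z j (proj c x))" using j by simp
  also have "\<dots> = Z j x" by (rule proj_comp_sum[OF End_lm[OF Z[OF j]], symmetric])
  finally show ?thesis .
qed

lemma End_comm: assumes "T \<in> End_deg m \<omega> \<sigma> j" shows "\<sigma> (T x) = sc (\<omega> ^ j) (T (\<sigma> x))"
proof -
  have lT: "lm T" using End_lm[OF assms] .
  have "\<sigma> (T x) = (\<Sum>c<m. \<sigma> (T (proj c x)))"
    by (subst proj_comp_sum[OF lT]) (simp add: lm_sum[OF lm_sigma])
  also have "\<dots> = (\<Sum>c<m. sc (\<omega> ^ j) (T (sc (\<omega> ^ c) (proj c x))))"
  proof (rule sum.cong[OF refl])
    fix c assume c: "c \<in> {..<m}"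
    have "T (proj c x) \<in> V ((j + c) mod m)" using End_hom[OF assms proj_V] c by simp
    then have "\<sigma> (T (proj c x)) = sc (\<omega> ^ (j + c)) (T (proj c x))"
      by (metis V_iff V_mod)
    then show "\<sigma> (T (proj c x)) = sc (\<omega> ^ j) (T (sc (\<omega> ^ c) (proj c x)))"
      by (simp add: lm_sc[OF lT] power_add)
  qed
  also have "\<dots> = sc (\<omega> ^ j) (T (\<sigma> x))"
    by (subst proj_comp_sum[OF lm_comp[OF lT lm_sigma], of x]) (simp add: sigma_proj sc_sum)
  finally show ?thesis .
qed

lemma End_of_comm: assumes "lm T" "\<And>x. \<sigma> (T x) = sc (\<omega> ^ j) (T (\<sigma> x))"
  shows "T \<in> End_deg m \<omega> \<sigma> j"
  unfolding End_deg_iff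
proof (intro conjI allI impI ballI)
  fix c x assume "c < m" "x \<in> V c"
  then have "\<sigma> (T x) = sc (\<omega> ^ (j + c)) (T x)"
    by (simp add: assms(2) V_iff lm_sc[OF assms(1)] power_add)
  then show "T x \<in> V ((j + c) mod m)" using V_mod V_iff by blast
qed (rule assms(1))

end



lemma mod_arith3:
  fixes m a b c :: nat
  assumes "0 < m" "a < m" "b < m" "c < m"
  shows "(a + b) mod m = c \<longleftrightarrow> a = (c + m - b) mod m"
proof
  assume h: "(a + b) mod m = c"
  have "(((a + b) mod m + 0) mod m + m - b) mod m = (a + 0) mod m" by (rule mod_arith2[OF assms(1,3)])
  then show "a = (c + m - b) mod m" using h assms by simp
next
  assume h: "a = (c + m - b) mod m"
  have "((c + m - b) mod m + b) mod m = (c + m - b + b) mod m" by (simp add: mod_add_left_eq)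
  also have "c + m - b + b = c + m" using assms by simp
  finally show "(a + b) mod m = c" using h assms by simp
qed

context grading begin

lemma lm_proj_expand: "lm f \<Longrightarrow> f x = (\<Sum>c<m. f (proj c x))"
  by (metis lm_sum proj_sum)

lemma hom_ext:
  fixes \<Phi> \<Psi> :: "('a,'k) vec \<Rightarrow> ('a,'k) vec \<Rightarrow> ('c,'k) vec"
  assumes "\<And>v. lm (\<lambda>u. \<Phi> u v)" "\<And>u. lm (\<Phi> u)" "\<And>v. lm (\<lambda>u. \<Psi> u v)" "\<And>u. lm (\<Psi> u)"
    and H: "\<And>a b x y. a < m \<Longrightarrow> b < m \<Longrightarrow> x \<in> V a \<Longrightarrow> y \<in> V b \<Longrightarrow> \<Phi> x y = \<Psi> x y"
  shows "\<Phi> u v = \<Psi> u v"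
proof -
  have "\<Phi> u v = (\<Sum>a<m. \<Phi> (proj a u) v)" by (rule lm_proj_expand[OF assms(1)])
  also have "\<dots> = (\<Sum>a<m. \<Sum>b<m. \<Phi> (proj a u) (proj b v))"
    by (rule sum.cong[OF refl], rule lm_proj_expand[OF assms(2)])
  also have "\<dots> = (\<Sum>a<m. \<Sum>b<m. \<Psi> (proj a u) (proj b v))"
    by (rule sum.cong[OF refl], rule sum.cong[OF refl], rule H[OF _ _ proj_V proj_V]) auto
  also have "\<dots> = (\<Sum>a<m. \<Psi> (proj a u) v)"
    by (rule sum.cong[OF refl], rule lm_proj_expand[OF assms(4), symmetric])
  also have "\<dots> = \<Psi> u v" by (rule lm_proj_expand[OF assms(3), symmetric])
  finally show ?thesis .
qed

end

locale galg = grading m \<omega> \<sigma> for m \<omega> and \<sigma> :: "('a,'k::field) op" +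
  fixes M :: "('a,'k) prod"
  assumes bil: "bilin M" and mult: "\<And>x y. \<sigma> (M x y) = M (\<sigma> x) (\<sigma> y)"
begin

lemma lmM1: "lm (\<lambda>x. M x y)" using bil by (simp add: bilin_def lin_lm)
lemma lmM2: "lm (M x)" using bil by (simp add: bilin_def lin_lm)

lemma mult_V: "x \<in> V a \<Longrightarrow> y \<in> V b \<Longrightarrow> M x y \<in> V ((a + b) mod m)"
proof -
  assume "x \<in> V a" "y \<in> V b"
  then have "M x y \<in> V (a + b)"
    by (simp add: V_iff mult lm_sc[OF lmM1] lm_sc[OF lmM2] power_add mult.commute)
  then show ?thesis using V_mod[of "a+b"] by simp
qed

lemma proj_mult_right:
  assumes "y \<in> V b" "b < m" "c < m"
  shows "proj c (M w y) = M (proj ((c + m - b) mod m) w) y"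
proof -
  have "proj c (M w y) = (\<Sum>a<m. proj c (M (proj a w) y))"
    by (rule lm_proj_expand[OF lm_comp[OF lm_proj lmM1]])
  also have "\<dots> = (\<Sum>a<m. if a = (c + m - b) mod m then M (proj a w) y else 0)"
  proof (rule sum.cong[OF refl])
    fix a assume a: "a \<in> {..<m}"
    have inV: "M (proj a w) y \<in> V ((a + b) mod m)" by (rule mult_V[OF proj_V assms(1)])
    have "proj c (M (proj a w) y) = (if c = (a + b) mod m then M (proj a w) y else 0)"
      by (rule proj_eig[OF inV assms(3)]) (use m_pos in simp)
    then show "proj c (M (proj a w) y) = (if a = (c + m - b) mod m then M (proj a w) y else 0)"
      using mod_arith3[OF m_pos _ assms(2,3), of a] a by auto
  qed
  also have "\<dots> = M (proj ((c + m - b) mod m) w) y" using m_pos by simp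
  finally show ?thesis .
qed

lemma proj_mult_left:
  assumes "x \<in> V a" "a < m" "c < m"
  shows "proj c (M x w) = M x (proj ((c + m - a) mod m) w)"
proof -
  have "proj c (M x w) = (\<Sum>b<m. proj c (M x (proj b w)))"
    by (rule lm_proj_expand[OF lm_comp[OF lm_proj lmM2]])
  also have "\<dots> = (\<Sum>b<m. if b = (c + m - a) mod m then M x (proj b w) else 0)"
  proof (rule sum.cong[OF refl])
    fix b assume b: "b \<in> {..<m}"
    have inV: "M x (proj b w) \<in> V ((a + b) mod m)" by (rule mult_V[OF assms(1) proj_V])
    have "proj c (M x (proj b w)) = (if c = (a + b) mod m then M x (proj b w) else 0)"
      by (rule proj_eig[OF inV assms(3)]) (use m_pos in simp)
    then show "proj c (M x (proj b w)) = (if b = (c + m - a) mod m then M x (proj b w) else 0)"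
      using mod_arith3[OF m_pos _ assms(2,3), of b] b by (auto simp: add.commute)
  qed
  also have "\<dots> = M x (proj ((c + m - a) mod m) w)" using m_pos by simp
  finally show ?thesis .
qed

lemma comp_der: assumes D: "D \<in> derivations M" shows "comp D j \<in> derivations M"
proof -
  have lD: "lm D" using D by (simp add: derivations_def lin_lm)
  have lD': "lm (comp D j)" by (rule lm_comp_op[OF lD])
  have "comp D j (M u v) = M (comp D j u) v + M u (comp D j v)" for u v
  proof (rule hom_ext[where \<Phi>="\<lambda>u v. comp D j (M u v)" and \<Psi>="\<lambda>u v. M (comp D j u) v + M u (comp D j v)"])
    show "lm (\<lambda>u. comp D j (M u v))" for v by (rule lm_comp[OF lD' lmM1])
    show "lm (\<lambda>v. comp D j (M u v))" for u by (rule lm_comp[OF lD' lmM2])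
    show "lm (\<lambda>u. M (comp D j u) v + M u (comp D j v))" for v
      by (rule lm_plus[OF lm_comp[OF lmM1 lD'] lmM1])
    show "lm (\<lambda>v. M (comp D j u) v + M u (comp D j v))" for u
      by (rule lm_plus[OF lmM2 lm_comp[OF lmM2 lD']])
    fix a b x y assume ab: "a < m" "b < m" and xy: "x \<in> V a" "y \<in> V b"
    have C: "((a + b) mod m + j) mod m < m" using m_pos by simp
    have "comp D j (M x y) = proj (((a + b) mod m + j) mod m) (D (M x y))"
      by (rule comp_hom[OF lD mult_V[OF xy]]) (use m_pos in simp)
    also have "\<dots> = proj (((a + b) mod m + j) mod m) (M (D x) y) + proj (((a + b) mod m + j) mod m) (M x (D y))"
      using D by (simp add: derivations_def lm_add[OF lm_proj])
    also have "proj (((a + b) mod m + j) mod m) (M (D x) y) = M (proj ((a + j) mod m) (D x)) y"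
      by (simp add: proj_mult_right[OF xy(2) ab(2) C] mod_arith2[OF m_pos ab(2)])
    also have "proj (((a + b) mod m + j) mod m) (M x (D y)) = M x (proj ((b + j) mod m) (D y))"
      using proj_mult_left[OF xy(1) ab(1) C] mod_arith2[OF m_pos ab(1), of b j] by (simp add: add.commute)
    also have "proj ((a + j) mod m) (D x) = comp D j x" by (rule comp_hom[OF lD xy(1) ab(1), symmetric])
    also have "proj ((b + j) mod m) (D y) = comp D j y" by (rule comp_hom[OF lD xy(2) ab(2), symmetric])
    finally show "comp D j (M x y) = M (comp D j x) y + M x (comp D j y)" .
  qed
  then show ?thesis using lD' by (simp add: derivations_def lin_lm)
qed

lemma comp_cen: assumes G: "G \<in> centroid M" shows "comp G j \<in> centroid M"
proof -
  have lG: "lm G" using G by (simp add: centroid_def lin_lm)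
  have lG': "lm (comp G j)" by (rule lm_comp_op[OF lG])
  have 1: "comp G j (M u v) = M (comp G j u) v" for u v
  proof (rule hom_ext[where \<Phi>="\<lambda>u v. comp G j (M u v)" and \<Psi>="\<lambda>u v. M (comp G j u) v"])
    show "lm (\<lambda>u. comp G j (M u v))" for v by (rule lm_comp[OF lG' lmM1])
    show "lm (\<lambda>v. comp G j (M u v))" for u by (rule lm_comp[OF lG' lmM2])
    show "lm (\<lambda>u. M (comp G j u) v)" for v by (rule lm_comp[OF lmM1 lG'])
    show "lm (\<lambda>v. M (comp G j u) v)" for u by (rule lmM2)
    fix a b x y assume ab: "a < m" "b < m" and xy: "x \<in> V a" "y \<in> V b"
    have C: "((a + b) mod m + j) mod m < m" using m_pos by simp
    have "comp G j (M x y) = proj (((a + b) mod m + j) mod m) (G (M x y))"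
      by (rule comp_hom[OF lG mult_V[OF xy]]) (use m_pos in simp)
    also have "\<dots> = proj (((a + b) mod m + j) mod m) (M (G x) y)"
      using G by (simp add: centroid_def)
    also have "\<dots> = M (proj ((a + j) mod m) (G x)) y"
      by (simp add: proj_mult_right[OF xy(2) ab(2) C] mod_arith2[OF m_pos ab(2)])
    also have "proj ((a + j) mod m) (G x) = comp G j x" by (rule comp_hom[OF lG xy(1) ab(1), symmetric])
    finally show "comp G j (M x y) = M (comp G j x) y" .
  qed
  have 2: "comp G j (M u v) = M u (comp G j v)" for u v
  proof (rule hom_ext[where \<Phi>="\<lambda>u v. comp G j (M u v)" and \<Psi>="\<lambda>u v. M u (comp G j v)"])
    show "lm (\<lambda>u. comp G j (M u v))" for v by (rule lm_comp[OF lG' lmM1])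
    show "lm (\<lambda>v. comp G j (M u v))" for u by (rule lm_comp[OF lG' lmM2])
    show "lm (\<lambda>u. M u (comp G j v))" for v by (rule lmM1)
    show "lm (\<lambda>v. M u (comp G j v))" for u by (rule lm_comp[OF lmM2 lG'])
    fix a b x y assume ab: "a < m" "b < m" and xy: "x \<in> V a" "y \<in> V b"
    have C: "((a + b) mod m + j) mod m < m" using m_pos by simp
    have "comp G j (M x y) = proj (((a + b) mod m + j) mod m) (G (M x y))"
      by (rule comp_hom[OF lG mult_V[OF xy]]) (use m_pos in simp)
    also have "\<dots> = proj (((a + b) mod m + j) mod m) (M x (G y))"
    proof -
      have "G (M x y) = M x (G y)" using G unfolding centroid_def by blast
      then show ?thesis by (rule arg_cong)
    qed
    also have "\<dots> = M x (proj ((b + j) mod m) (G y))"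
      using proj_mult_left[OF xy(1) ab(1) C] mod_arith2[OF m_pos ab(1), of b j] by (simp add: add.commute)
    also have "proj ((b + j) mod m) (G y) = comp G j y" by (rule comp_hom[OF lG xy(2) ab(2), symmetric])
    finally show "comp G j (M x y) = M x (comp G j y)" .
  qed
  show ?thesis using lG' 1 2 by (simp add: centroid_def lin_lm)
qed

end



lemma opsum_super: "finite G \<Longrightarrow> {i. F i u \<noteq> 0} \<subseteq> G \<Longrightarrow> opsum F u = (\<Sum>i\<in>G. F i u)"
  unfolding opsum_def by (rule sum.mono_neutral_left) auto

lemma opsum_super': "finite G \<Longrightarrow> (\<And>i. i \<notin> G \<Longrightarrow> F i u = 0) \<Longrightarrow> opsum F u = (\<Sum>i\<in>G. F i u)"
  by (rule opsum_super) auto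

lemma sfin: "summable_fam F \<Longrightarrow> finite {i. F i u \<noteq> 0}" by (simp add: summable_fam_def)

lemma lm_opsum:
  assumes S: "summable_fam F" and L: "\<And>i. lm (F i)"
  shows "lm (opsum F)"
proof -
  { fix u v
    let ?G = "{i. F i u \<noteq> 0} \<union> {i. F i v \<noteq> 0} \<union> {i. F i (u + v) \<noteq> 0}"
    have f: "finite ?G" using S by (simp add: summable_fam_def)
    have "opsum F (u + v) = opsum F u + opsum F v"
      by (subst (1 2 3) opsum_super[OF f]) (auto simp: lm_add[OF L] sum.distrib) }
  moreover
  { fix r u
    let ?G = "{i. F i u \<noteq> 0} \<union> {i. F i (sc r u) \<noteq> 0}"
    have f: "finite ?G" using S by (simp add: summable_fam_def)
    have "opsum F (sc r u) = sc r (opsum F u)"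
      by (subst (1 2) opsum_super[OF f]) (auto simp: lm_sc[OF L] sc_sum) }
  ultimately show ?thesis by (simp add: lm_def)
qed

lemma der_opsum:
  assumes S: "summable_fam F" and D: "\<And>i. F i \<in> derivations M" and B: "bilin M"
  shows "opsum F \<in> derivations M"
proof -
  have L: "lm (F i)" for i using D by (simp add: derivations_def lin_lm)
  { fix x y
    let ?G = "{i. F i x \<noteq> 0} \<union> {i. F i y \<noteq> 0} \<union> {i. F i (M x y) \<noteq> 0}"
    have f: "finite ?G" using S by (simp add: summable_fam_def)
    have "opsum F (M x y) = (\<Sum>i\<in>?G. M (F i x) y + M x (F i y))"
      by (subst opsum_super[OF f]) (use D in \<open>auto simp: derivations_def\<close>)
    also have "\<dots> = M (\<Sum>i\<in>?G. F i x) y + M x (\<Sum>i\<in>?G. F i y)"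
      by (simp add: sum.distrib lm_sum[OF bilin_lm1[OF B]] lm_sum[OF bilin_lm2[OF B]])
    also have "\<dots> = M (opsum F x) y + M x (opsum F y)"
      by (subst (1 2) opsum_super[OF f]) auto
    finally have "opsum F (M x y) = M (opsum F x) y + M x (opsum F y)" . }
  then show ?thesis using lm_opsum[OF S L] by (simp add: derivations_def lin_lm)
qed

lemma summable_optens1:
  fixes f :: "'i \<Rightarrow> ('a,'k::field) op" and g :: "'i \<Rightarrow> ('b,'k) op"
  assumes "summable_fam f"
  shows "summable_fam (\<lambda>i. optens (f i) (g i))"
  unfolding summable_fam_def
proof
  fix u :: "('a \<times> 'b, 'k) vec"
  have "{i. optens (f i) (g i) u \<noteq> 0} \<subseteq> (\<Union>q\<in>Poly_Mapping.keys u. {i. f i (ebas (fst q)) \<noteq> 0})"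
  proof
    fix i assume "i \<in> {i. optens (f i) (g i) u \<noteq> 0}"
    then have "optens (f i) (g i) u \<noteq> 0" by simp
    show "i \<in> (\<Union>q\<in>Poly_Mapping.keys u. {i. f i (ebas (fst q)) \<noteq> 0})"
    proof (rule ccontr)
      assume "i \<notin> (\<Union>q\<in>Poly_Mapping.keys u. {i. f i (ebas (fst q)) \<noteq> 0})"
      then have "\<forall>q\<in>Poly_Mapping.keys u. f i (ebas (fst q)) = 0" by blast
      then have "optens (f i) (g i) u = 0" by (intro optens_zero_on) auto
      then show False using \<open>optens (f i) (g i) u \<noteq> 0\<close> by contradiction
    qed
  qed
  moreover have "finite (\<Union>q\<in>Poly_Mapping.keys u. {i. f i (ebas (fst q)) \<noteq> 0})"
    using assms by (simp add: summable_fam_def)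
  ultimately show "finite {i. optens (f i) (g i) u \<noteq> 0}" by (rule finite_subset)
qed

lemma summable_optens2:
  fixes f :: "'i \<Rightarrow> ('a,'k::field) op" and g :: "'i \<Rightarrow> ('b,'k) op"
  assumes "summable_fam g"
  shows "summable_fam (\<lambda>i. optens (f i) (g i))"
  unfolding summable_fam_def
proof
  fix u :: "('a \<times> 'b, 'k) vec"
  have "{i. optens (f i) (g i) u \<noteq> 0} \<subseteq> (\<Union>q\<in>Poly_Mapping.keys u. {i. g i (ebas (snd q)) \<noteq> 0})"
  proof
    fix i assume "i \<in> {i. optens (f i) (g i) u \<noteq> 0}"
    then have "optens (f i) (g i) u \<noteq> 0" by simp
    show "i \<in> (\<Union>q\<in>Poly_Mapping.keys u. {i. g i (ebas (snd q)) \<noteq> 0})"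
    proof (rule ccontr)
      assume "i \<notin> (\<Union>q\<in>Poly_Mapping.keys u. {i. g i (ebas (snd q)) \<noteq> 0})"
      then have "\<forall>q\<in>Poly_Mapping.keys u. g i (ebas (snd q)) = 0" by blast
      then have "optens (f i) (g i) u = 0" by (intro optens_zero_on) auto
      then show False using \<open>optens (f i) (g i) u \<noteq> 0\<close> by contradiction
    qed
  qed
  moreover have "finite (\<Union>q\<in>Poly_Mapping.keys u. {i. g i (ebas (snd q)) \<noteq> 0})"
    using assms by (simp add: summable_fam_def)
  ultimately show "finite {i. optens (f i) (g i) u \<noteq> 0}" by (rule finite_subset)
qed

lemma opsum_comp_left:
  assumes "summable_fam F" "lm T"
  shows "T (opsum F u) = opsum (\<lambda>i x. T (F i x)) u"
proof -
  let ?G = "{i. F i u \<noteq> 0}"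
  have f: "finite ?G" using assms(1) by (simp add: summable_fam_def)
  show ?thesis
    by (subst (1 2) opsum_super[OF f]) (auto simp: lm_sum[OF assms(2)] lm_0[OF assms(2)])
qed

lemma opsum_comp_right:
  assumes "summable_fam F"
  shows "opsum F (T u) = opsum (\<lambda>i x. F i (T x)) u"
  unfolding opsum_def by simp

lemma summable_comp_left: "summable_fam F \<Longrightarrow> lm T \<Longrightarrow> summable_fam (\<lambda>i x. T (F i x))"
  unfolding summable_fam_def
proof (intro allI)
  fix v assume S: "\<forall>v. finite {i. F i v \<noteq> 0}" and L: "lm T"
  have "{i. T (F i v) \<noteq> 0} \<subseteq> {i. F i v \<noteq> 0}" using lm_0[OF L] by auto
  then show "finite {i. T (F i v) \<noteq> 0}" using S finite_subset by blast
qed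

lemma summable_comp_right: "summable_fam F \<Longrightarrow> summable_fam (\<lambda>i x. F i (T x))"
  unfolding summable_fam_def by simp

lemma opsum_zero_fam: "opsum (\<lambda>i x. 0) u = 0" by (simp add: opsum_def)

context grading begin

lemma End_opsum:
  assumes S: "summable_fam F" and E: "\<And>i. F i \<in> End_deg m \<omega> \<sigma> j"
  shows "opsum F \<in> End_deg m \<omega> \<sigma> j"
  unfolding End_deg_iff
proof (intro conjI allI impI ballI)
  show "lm (opsum F)" by (rule lm_opsum[OF S]) (use E End_lm in blast)
  fix c x assume "c < m" "x \<in> V c"
  then show "opsum F x \<in> V ((j + c) mod m)"
    unfolding opsum_def by (intro V_sum) (use E End_hom in blast)
qed

lemma End_sc: "T \<in> End_deg m \<omega> \<sigma> j \<Longrightarrow> (\<lambda>x. sc r (T x)) \<in> End_deg m \<omega> \<sigma> j"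
  unfolding End_deg_iff by (auto intro: lm_scal V_sc)

lemma End_zero: "(\<lambda>x. 0) \<in> End_deg m \<omega> \<sigma> j"
  unfolding End_deg_iff by auto

lemma End_sum: "(\<And>i. i \<in> A \<Longrightarrow> T i \<in> End_deg m \<omega> \<sigma> j) \<Longrightarrow> (\<lambda>x. \<Sum>i\<in>A. T i x) \<in> End_deg m \<omega> \<sigma> j"
  unfolding End_deg_iff by (auto intro!: lm_sumf V_sum)

end

lemma der_sc: "bilin M \<Longrightarrow> d \<in> derivations M \<Longrightarrow> (\<lambda>x. sc r (d x)) \<in> derivations M"
  by (simp add: derivations_def lin_lm lm_scal sc_add lm_sc[OF bilin_lm1] lm_sc[OF bilin_lm2])

lemma der_zero: "bilin M \<Longrightarrow> (\<lambda>x. 0) \<in> derivations M"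
  by (simp add: derivations_def lin_lm lm_0[OF bilin_lm1] lm_0[OF bilin_lm2])

lemma der_sum: "bilin M \<Longrightarrow> (\<And>i. i \<in> A \<Longrightarrow> d i \<in> derivations M) \<Longrightarrow> (\<lambda>x. \<Sum>i\<in>A. d i x) \<in> derivations M"
proof (induction A rule: infinite_finite_induct)
  case (insert a A)
  have "(\<lambda>x. \<Sum>i\<in>insert a A. d i x) = (\<lambda>x. d a x + (\<Sum>i\<in>A. d i x))" using insert by simp
  moreover have "(\<lambda>x. d a x + (\<Sum>i\<in>A. d i x)) \<in> derivations M"
  proof -
    have da: "d a \<in> derivations M" using insert by simp
    have dA: "(\<lambda>x. \<Sum>i\<in>A. d i x) \<in> derivations M" using insert by simp
    show ?thesis using da dA insert.prems(1)
      by (simp add: derivations_def lin_lm lm_plus lm_add[OF bilin_lm1] lm_add[OF bilin_lm2] algebra_simps)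
  qed
  ultimately show ?case by simp
qed (auto intro: der_zero)



locale L31 =
  fixes \<omega> :: "'k::field" and m :: nat
    and MA :: "('a,'k) prod" and MS :: "('b,'k) prod"
    and \<sigma>1 :: "('a,'k) op" and \<sigma>2 :: "('b,'k) op"
    and BC :: "('a,'k) op set" and BCk :: "nat \<Rightarrow> ('a,'k) op set"
  assumes m_pos: "0 < m"
    and root: "\<omega> ^ m = 1" and primitive: "\<forall>i. 0 < i \<and> i < m \<longrightarrow> \<omega> ^ i \<noteq> 1"
    and A_alg: "bilin MA" and A_perfect: "perfect MA"
    and S_alg: "bilin MS" and S_cau: "comm_assoc_unital MS"
    and psi: "psi_iso MA MS"
    and aut1: "automorphism MA \<sigma>1" and per1: "\<sigma>1 ^^ m = id"
    and aut2: "automorphism MS \<sigma>2" and per2: "\<sigma>2 ^^ m = id"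
    and basisC: "is_basis (centroid MA) BC"
    and basisCk: "\<forall>k<m. is_basis (centroid MA \<inter> End_deg m \<omega> \<sigma>1 k) (BCk k)"
begin

abbreviation MT where "MT \<equiv> tmult MA MS"
abbreviation sig where "sig \<equiv> optens \<sigma>1 \<sigma>2"

lemma lm_s1: "lm \<sigma>1" using aut1 by (simp add: automorphism_def lin_lm)
lemma lm_s2: "lm \<sigma>2" using aut2 by (simp add: automorphism_def lin_lm)

sublocale gA: galg m \<omega> \<sigma>1 MA
  by unfold_locales (use m_pos root primitive lm_s1 per1 A_alg aut1 in \<open>auto simp: automorphism_def\<close>)

sublocale gS: galg m \<omega> \<sigma>2 MS
  by unfold_locales (use m_pos root primitive lm_s2 per2 S_alg aut2 in \<open>auto simp: automorphism_def\<close>)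

lemma MT_tens: "MT (tens x s) (tens y t) = tens (MA x y) (MS s t)"
  by (rule tmult_tens[OF A_alg S_alg])

lemma sig_tens: "sig (tens x s) = tens (\<sigma>1 x) (\<sigma>2 s)"
  by (rule optens_tens[OF lm_s1 lm_s2])

lemma sig_mult: "sig (MT u v) = MT (sig u) (sig v)"
proof (rule bil_ext[where \<Phi>="\<lambda>u v. sig (MT u v)" and \<Psi>="\<lambda>u v. MT (sig u) (sig v)"])
  show "lm (\<lambda>u. sig (MT u v))" for v by (rule lm_comp[OF lm_optens lm_tmult1])
  show "lm (\<lambda>v. sig (MT u v))" for u by (rule lm_comp[OF lm_optens lm_tmult2])
  show "lm (\<lambda>u. MT (sig u) (sig v))" for v by (rule lm_comp[OF lm_tmult1 lm_optens])
  show "lm (\<lambda>v. MT (sig u) (sig v))" for u by (rule lm_comp[OF lm_tmult2 lm_optens])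
  fix x s y t
  show "sig (MT (tens x s) (tens y t)) = MT (sig (tens x s)) (sig (tens y t))"
    using aut1 aut2 by (simp add: MT_tens sig_tens automorphism_def)
qed

lemma sig_per: "sig ^^ m = id"
proof
  fix u
  have "(sig ^^ m) u = optens (\<sigma>1 ^^ m) (\<sigma>2 ^^ m) u" by (rule optens_pow[OF lm_s1 lm_s2])
  also have "\<dots> = u" using optens_id by (simp add: per1 per2 id_def)
  finally show "(sig ^^ m) u = id u" by simp
qed

sublocale gT: galg m \<omega> sig MT
  by unfold_locales (use m_pos root primitive lm_optens sig_per bilin_tmult sig_mult in auto)

definition e :: "('b,'k) vec" where "e = (SOME e. \<forall>x. MS e x = x)"

lemma e_left: "MS e x = x"
proof -
  have "\<exists>e. \<forall>x. MS e x = x" using S_cau by (simp add: comm_assoc_unital_def)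
  then show ?thesis unfolding e_def by (rule someI_ex[where P="\<lambda>e. \<forall>x. MS e x = x", THEN spec])
qed

lemma S_comm: "MS x y = MS y x" using S_cau by (simp add: comm_assoc_unital_def)
lemma S_assoc: "MS (MS x y) z = MS x (MS y z)" using S_cau unfolding comm_assoc_unital_def by blast
lemma e_right: "MS x e = x" using e_left S_comm by metis

lemma der_e: "g \<in> derivations MS \<Longrightarrow> g e = 0"
proof -
  assume "g \<in> derivations MS"
  then have "g (MS e e) = MS (g e) e + MS e (g e)" by (simp add: derivations_def)
  then have "g e = g e + g e" by (simp add: e_left e_right)
  then show ?thesis by simp
qed

lemma lmA1: "lm (\<lambda>x. MA x y)" by (rule bilin_lm1[OF A_alg])
lemma lmA2: "lm (MA x)" by (rule bilin_lm2[OF A_alg])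
lemma lmS1: "lm (\<lambda>x. MS x y)" by (rule bilin_lm1[OF S_alg])
lemma lmS2: "lm (MS x)" by (rule bilin_lm2[OF S_alg])
lemma lmT1: "lm (\<lambda>x. MT x y)" by (rule lm_tmult1)
lemma lmT2: "lm (MT x)" by (rule lm_tmult2)

lemma der_optens_L:
  assumes f: "f \<in> derivations MA"
  shows "optens f (MS s) \<in> derivations MT"
proof -
  have lf: "lm f" using f by (simp add: derivations_def lin_lm)
  let ?T = "optens f (MS s)"
  have "?T (MT u v) = MT (?T u) v + MT u (?T v)" for u v
  proof (rule bil_ext[where \<Phi>="\<lambda>u v. ?T (MT u v)" and \<Psi>="\<lambda>u v. MT (?T u) v + MT u (?T v)"])
    show "lm (\<lambda>u. ?T (MT u v))" for v by (rule lm_comp[OF lm_optens lmT1])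
    show "lm (\<lambda>v. ?T (MT u v))" for u by (rule lm_comp[OF lm_optens lmT2])
    show "lm (\<lambda>u. MT (?T u) v + MT u (?T v))" for v by (rule lm_plus[OF lm_comp[OF lmT1 lm_optens] lmT1])
    show "lm (\<lambda>v. MT (?T u) v + MT u (?T v))" for u by (rule lm_plus[OF lmT2 lm_comp[OF lmT2 lm_optens]])
    fix x a y b
    have "f (MA x y) = MA (f x) y + MA x (f y)" using f by (simp add: derivations_def)
    moreover have "MS s (MS a b) = MS (MS s a) b" by (simp add: S_assoc)
    moreover have "MS s (MS a b) = MS a (MS s b)" by (metis S_assoc S_comm)
    ultimately show "?T (MT (tens x a) (tens y b)) = MT (?T (tens x a)) (tens y b) + MT (tens x a) (?T (tens y b))"
      by (simp add: MT_tens optens_tens[OF lf lmS2] tens_add1)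
  qed
  then show ?thesis using lm_optens by (simp add: derivations_def lin_lm)
qed

lemma der_optens_C:
  assumes c: "c \<in> centroid MA" and g: "g \<in> derivations MS"
  shows "optens c g \<in> derivations MT"
proof -
  have lc: "lm c" using c by (simp add: centroid_def lin_lm)
  have lg: "lm g" using g by (simp add: derivations_def lin_lm)
  let ?T = "optens c g"
  have "?T (MT u v) = MT (?T u) v + MT u (?T v)" for u v
  proof (rule bil_ext[where \<Phi>="\<lambda>u v. ?T (MT u v)" and \<Psi>="\<lambda>u v. MT (?T u) v + MT u (?T v)"])
    show "lm (\<lambda>u. ?T (MT u v))" for v by (rule lm_comp[OF lm_optens lmT1])
    show "lm (\<lambda>v. ?T (MT u v))" for u by (rule lm_comp[OF lm_optens lmT2])
    show "lm (\<lambda>u. MT (?T u) v + MT u (?T v))" for v by (rule lm_plus[OF lm_comp[OF lmT1 lm_optens] lmT1])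
    show "lm (\<lambda>v. MT (?T u) v + MT u (?T v))" for u by (rule lm_plus[OF lmT2 lm_comp[OF lmT2 lm_optens]])
    fix x a y b
    have "g (MS a b) = MS (g a) b + MS a (g b)" using g by (simp add: derivations_def)
    moreover have "c (MA x y) = MA (c x) y" "c (MA x y) = MA x (c y)" using c unfolding centroid_def by blast+
    ultimately show "?T (MT (tens x a) (tens y b)) = MT (?T (tens x a)) (tens y b) + MT (tens x a) (?T (tens y b))"
      by (simp add: MT_tens optens_tens[OF lc lg] tens_add2)
  qed
  then show ?thesis using lm_optens by (simp add: derivations_def lin_lm)
qed

lemma L_End: "s \<in> eigsp \<omega> \<sigma>2 l \<Longrightarrow> MS s \<in> End_deg m \<omega> \<sigma>2 l"
  unfolding gS.End_deg_iff using lmS2 gS.mult_V by blast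

lemma optens_End:
  assumes f: "f \<in> End_deg m \<omega> \<sigma>1 k" and g: "g \<in> End_deg m \<omega> \<sigma>2 l" and j: "(k + l) mod m = j mod m"
  shows "optens f g \<in> End_deg m \<omega> sig j"
proof (rule gT.End_of_comm[OF lm_optens])
  fix u
  have lf: "lm f" and lg: "lm g" using f g gA.End_lm gS.End_lm by auto
  have cf: "(\<lambda>x. \<sigma>1 (f x)) = (\<lambda>x. sc (\<omega> ^ k) (f (\<sigma>1 x)))" using gA.End_comm[OF f] by auto
  have cg: "(\<lambda>x. \<sigma>2 (g x)) = (\<lambda>x. sc (\<omega> ^ l) (g (\<sigma>2 x)))" using gS.End_comm[OF g] by auto
  have "sig (optens f g u) = optens (\<lambda>x. \<sigma>1 (f x)) (\<lambda>x. \<sigma>2 (g x)) u"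
    by (rule optens_comp[OF lm_s1 lm_s2 lf lg])
  also have "\<dots> = sc (\<omega> ^ k) (sc (\<omega> ^ l) (optens (\<lambda>x. f (\<sigma>1 x)) (\<lambda>x. g (\<sigma>2 x)) u))"
    unfolding cf cg by (simp add: optens_sc1 optens_sc2)
  also have "optens (\<lambda>x. f (\<sigma>1 x)) (\<lambda>x. g (\<sigma>2 x)) u = optens f g (sig u)"
    by (rule optens_comp[OF lf lg lm_s1 lm_s2, symmetric])
  finally have *: "sig (optens f g u) = sc (\<omega> ^ k) (sc (\<omega> ^ l) (optens f g (sig u)))" .
  have "\<omega> ^ k * \<omega> ^ l = \<omega> ^ j" using j gA.omega_mod by (metis power_add)
  then show "sig (optens f g u) = sc (\<omega> ^ j) (optens f g (sig u))" using * by simp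
qed

end



lemma optens_cong:
  assumes "\<And>a. f (ebas a) = f' (ebas a)" "\<And>q. q \<in> Poly_Mapping.keys u \<Longrightarrow> g (ebas (snd q)) = g' (ebas (snd q))"
  shows "optens f g u = optens f' g' u"
  unfolding optens_alt using assms by (intro sum.cong) auto

lemma ltensor_gen:
  fixes f :: "'i \<Rightarrow> ('a,'k::field) op" and g :: "'i \<Rightarrow> ('b,'k) op"
  assumes S: "summable_fam f" and EV: "\<And>i. f i \<in> EV" and EW: "\<And>i. g i \<in> EW"
    and Z: "(\<lambda>x. 0) \<in> EV" and g0: "g0 \<in> EW"
  shows "opsum (\<lambda>i. optens (f i) (g i)) \<in> ltensor EV EW"
proof -
  define N where "N = {i. \<exists>a. f i (ebas a) \<noteq> 0}"
  define Na where "Na a = {i. f i (ebas a) \<noteq> 0}" for a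
  define ai where "ai i = (SOME a. f i (ebas a) \<noteq> 0)" for i
  define h where "h i = (ai i, to_nat_on (Na (ai i)) i)" for i
  have ai: "i \<in> N \<Longrightarrow> i \<in> Na (ai i)" for i
    using someI_ex[of "\<lambda>a. f i (ebas a) \<noteq> 0"] unfolding N_def Na_def ai_def by auto
  have finNa: "finite (Na a)" for a using S by (simp add: summable_fam_def Na_def)
  have inj: "inj_on h N"
  proof (rule inj_onI)
    fix i i' assume i: "i \<in> N" "i' \<in> N" and hh: "h i = h i'"
    then have a: "ai i = ai i'" by (simp add: h_def)
    have "to_nat_on (Na (ai i)) i = to_nat_on (Na (ai i)) i'" using hh a by (simp add: h_def)
    moreover have "inj_on (to_nat_on (Na (ai i))) (Na (ai i))"
      by (rule inj_on_to_nat_on, rule countable_finite, rule finNa)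
    ultimately show "i = i'" using ai[OF i(1)] ai[OF i(2)] a by (auto dest: inj_onD)
  qed
  define f' where "f' p = (if p \<in> h ` N then f (inv_into N h p) else (\<lambda>x. 0))" for p
  define g' where "g' p = (if p \<in> h ` N then g (inv_into N h p) else g0)" for p
  have f'h: "i \<in> N \<Longrightarrow> f' (h i) = f i" for i using inj by (simp add: f'_def)
  have g'h: "i \<in> N \<Longrightarrow> g' (h i) = g i" for i using inj by (simp add: g'_def)
  have notN: "i \<notin> N \<Longrightarrow> optens (f i) (g i) u = 0" for i u
    by (rule optens_zero_on) (auto simp: N_def)
  have f'EV: "f' p \<in> EV" for p using EV Z by (simp add: f'_def)
  have g'EW: "g' p \<in> EW" for p using EW g0 by (simp add: g'_def)
  have S': "summable_fam f'"
    unfolding summable_fam_def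
  proof
    fix v
    have "{p. f' p v \<noteq> 0} \<subseteq> h ` {i. f i v \<noteq> 0}"
    proof
      fix p assume "p \<in> {p. f' p v \<noteq> 0}"
      then have p: "p \<in> h ` N" "f (inv_into N h p) v \<noteq> 0" by (auto simp: f'_def split: if_splits)
      then show "p \<in> h ` {i. f i v \<noteq> 0}" by (metis (mono_tags, lifting) f_inv_into_f image_eqI mem_Collect_eq)
    qed
    moreover have "finite (h ` {i. f i v \<noteq> 0})" using S by (simp add: summable_fam_def)
    ultimately show "finite {p. f' p v \<noteq> 0}" by (rule finite_subset)
  qed
  have eq: "opsum (\<lambda>p. optens (f' p) (g' p)) = opsum (\<lambda>i. optens (f i) (g i))"
  proof
    fix u
    define K where "K = {i. optens (f i) (g i) u \<noteq> 0}"
    have KN: "K \<subseteq> N" using notN K_def by blast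
    have set: "{p. optens (f' p) (g' p) u \<noteq> 0} = h ` K"
    proof
      show "{p. optens (f' p) (g' p) u \<noteq> 0} \<subseteq> h ` K"
      proof
        fix p assume p: "p \<in> {p. optens (f' p) (g' p) u \<noteq> 0}"
        then have pN: "p \<in> h ` N" by (auto simp: f'_def split: if_splits)
        then obtain i where i: "i \<in> N" "p = h i" by auto
        then show "p \<in> h ` K" using p by (auto simp: K_def f'h g'h)
      qed
      show "h ` K \<subseteq> {p. optens (f' p) (g' p) u \<noteq> 0}"
        using KN by (auto simp: K_def f'h g'h)
    qed
    have "opsum (\<lambda>p. optens (f' p) (g' p)) u = (\<Sum>p\<in>h ` K. optens (f' p) (g' p) u)"
      unfolding opsum_def set ..
    also have "\<dots> = (\<Sum>i\<in>K. optens (f' (h i)) (g' (h i)) u)"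
      by (rule sum.reindex[unfolded o_def]) (rule inj_on_subset[OF inj KN])
    also have "\<dots> = (\<Sum>i\<in>K. optens (f i) (g i) u)"
      by (rule sum.cong) (use KN f'h g'h in auto)
    also have "\<dots> = opsum (\<lambda>i. optens (f i) (g i)) u" by (simp add: opsum_def K_def)
    finally show "opsum (\<lambda>p. optens (f' p) (g' p)) u = opsum (\<lambda>i. optens (f i) (g i)) u" .
  qed
  show ?thesis unfolding ltensor_def
    using f'EV g'EW S' eq[symmetric] by blast
qed

lemma rebase:
  fixes \<phi> :: "'i \<Rightarrow> ('a,'k::field) op" and g :: "'i \<Rightarrow> ('b,'k) op"
    and F :: "'i \<Rightarrow> ('a,'k) op set" and c :: "'i \<Rightarrow> ('a,'k) op \<Rightarrow> 'k"
  assumes S: "summable_fam g" and fin: "\<And>i. finite (F i)" and FB: "\<And>i. F i \<subseteq> B"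
    and phi: "\<And>i. \<phi> i = (\<lambda>x. \<Sum>\<beta>\<in>F i. sc (c i \<beta>) (\<beta> x))"
  defines "G \<equiv> (\<lambda>\<beta>. if \<beta> \<in> B then opsum (\<lambda>i s. sc (if \<beta> \<in> F i then c i \<beta> else 0) (g i s)) else (\<lambda>s. 0))"
  shows "opsum (\<lambda>i. optens (\<phi> i) (g i)) = opsum (\<lambda>\<beta>. optens \<beta> (G \<beta>))"
    and "summable_fam G"
proof -
  define c' where "c' i \<beta> = (if \<beta> \<in> F i then c i \<beta> else 0)" for i \<beta>
  have G: "G = (\<lambda>\<beta>. if \<beta> \<in> B then opsum (\<lambda>i s. sc (c' i \<beta>) (g i s)) else (\<lambda>s. 0))"
    unfolding G_def c'_def ..
  show "summable_fam G"
    unfolding summable_fam_def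
  proof
    fix s
    have "{\<beta>. G \<beta> s \<noteq> 0} \<subseteq> (\<Union>i\<in>{i. g i s \<noteq> 0}. F i)"
    proof
      fix \<beta> assume "\<beta> \<in> {\<beta>. G \<beta> s \<noteq> 0}"
      then have "opsum (\<lambda>i s. sc (c' i \<beta>) (g i s)) s \<noteq> 0" by (auto simp: G split: if_splits)
      then obtain i where "sc (c' i \<beta>) (g i s) \<noteq> 0" unfolding opsum_def
        by (metis (mono_tags, lifting) sum.neutral)
      then have "\<beta> \<in> F i" "g i s \<noteq> 0" by (auto simp: c'_def split: if_splits)
      then show "\<beta> \<in> (\<Union>i\<in>{i. g i s \<noteq> 0}. F i)" by blast
    qed
    moreover have "finite (\<Union>i\<in>{i. g i s \<noteq> 0}. F i)" using S fin by (simp add: summable_fam_def)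
    ultimately show "finite {\<beta>. G \<beta> s \<noteq> 0}" by (rule finite_subset)
  qed
  show "opsum (\<lambda>i. optens (\<phi> i) (g i)) = opsum (\<lambda>\<beta>. optens \<beta> (G \<beta>))"
  proof
    fix u :: "('a \<times> 'b, 'k) vec"
    define P where "P = snd ` Poly_Mapping.keys u"
    define I where "I = (\<Union>p\<in>P. {i. g i (ebas p) \<noteq> 0})"
    define BU where "BU = (\<Union>i\<in>I. F i)"
    have finI: "finite I" using S by (simp add: I_def P_def summable_fam_def)
    have finBU: "finite BU" using finI fin by (simp add: BU_def)
    have zI: "i \<notin> I \<Longrightarrow> q \<in> Poly_Mapping.keys u \<Longrightarrow> g i (ebas (snd q)) = 0" for i q
      by (auto simp: I_def P_def)
    have Gp: "G \<beta> (ebas (snd q)) = (\<Sum>i\<in>I. sc (c' i \<beta>) (g i (ebas (snd q))))"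
      if "\<beta> \<in> B" "q \<in> Poly_Mapping.keys u" for \<beta> q
      using that by (simp add: G) (rule opsum_super', rule finI, simp add: zI)
    have "opsum (\<lambda>i. optens (\<phi> i) (g i)) u = (\<Sum>i\<in>I. optens (\<phi> i) (g i) u)"
      by (rule opsum_super'[OF finI], rule optens_zero_on) (simp add: zI)
    also have "\<dots> = (\<Sum>i\<in>I. \<Sum>\<beta>\<in>F i. sc (c i \<beta>) (optens \<beta> (g i) u))"
      by (simp add: phi optens_sum1 optens_sc1)
    also have "\<dots> = (\<Sum>i\<in>I. \<Sum>\<beta>\<in>BU. sc (c' i \<beta>) (optens \<beta> (g i) u))"
    proof (rule sum.cong[OF refl])
      fix i assume "i \<in> I"
      then have "F i \<subseteq> BU" by (auto simp: BU_def)
      then show "(\<Sum>\<beta>\<in>F i. sc (c i \<beta>) (optens \<beta> (g i) u)) = (\<Sum>\<beta>\<in>BU. sc (c' i \<beta>) (optens \<beta> (g i) u))"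
        by (intro sum.mono_neutral_cong_left finBU) (auto simp: c'_def)
    qed
    also have "\<dots> = (\<Sum>\<beta>\<in>BU. \<Sum>i\<in>I. sc (c' i \<beta>) (optens \<beta> (g i) u))" by (rule sum.swap)
    also have "\<dots> = (\<Sum>\<beta>\<in>BU. optens \<beta> (G \<beta>) u)"
    proof (rule sum.cong[OF refl])
      fix \<beta> assume b: "\<beta> \<in> BU"
      then have bB: "\<beta> \<in> B" using FB by (auto simp: BU_def)
      have "optens \<beta> (G \<beta>) u = optens \<beta> (\<lambda>s. \<Sum>i\<in>I. sc (c' i \<beta>) (g i s)) u"
        by (rule optens_cong) (auto simp: Gp[OF bB])
      also have "\<dots> = (\<Sum>i\<in>I. sc (c' i \<beta>) (optens \<beta> (g i) u))"
        by (simp add: optens_sum2 optens_sc2)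
      finally show "(\<Sum>i\<in>I. sc (c' i \<beta>) (optens \<beta> (g i) u)) = optens \<beta> (G \<beta>) u" by simp
    qed
    also have "\<dots> = opsum (\<lambda>\<beta>. optens \<beta> (G \<beta>)) u"
    proof (rule opsum_super'[OF finBU, symmetric])
      fix \<beta> assume nb: "\<beta> \<notin> BU"
      show "optens \<beta> (G \<beta>) u = 0"
      proof (cases "\<beta> \<in> B")
        case True
        show ?thesis
        proof (rule optens_zero_on)
          fix q assume q: "q \<in> Poly_Mapping.keys u"
          have "G \<beta> (ebas (snd q)) = 0" unfolding Gp[OF True q]
            by (rule sum.neutral) (use nb in \<open>auto simp: BU_def c'_def\<close>)
          then show "tens (\<beta> (ebas (fst q))) (G \<beta> (ebas (snd q))) = 0" by simp
        qed
      qed (simp add: G)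
    qed
    finally show "opsum (\<lambda>i. optens (\<phi> i) (g i)) u = opsum (\<lambda>\<beta>. optens \<beta> (G \<beta>)) u" .
  qed
qed

context L31 begin

lemma Lset_obtain: "(\<And>i. g i \<in> Lset MS X) \<Longrightarrow> \<exists>s. \<forall>i. g i = MS (s i) \<and> s i \<in> X"
proof -
  assume H: "\<And>i. g i \<in> Lset MS X"
  have "\<forall>i. \<exists>s. g i = MS s \<and> s \<in> X" using H unfolding Lset_def by blast
  then show ?thesis by (rule choice)
qed

lemma BC_cen: "\<gamma> \<in> BC \<Longrightarrow> \<gamma> \<in> centroid MA"
  using basisC by (auto simp: is_basis_def)

lemma inter_zero:
  assumes X1: "X \<in> ltensor (derivations MA) (Lset MS UNIV)" and X2: "X \<in> rtensor BC (derivations MS)"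
  shows "X = (\<lambda>u. 0)"
proof -
  obtain f :: "'a \<times> nat \<Rightarrow> ('a,'k) op" and g :: "'a \<times> nat \<Rightarrow> ('b,'k) op" where fg: "X = opsum (\<lambda>i. optens (f i) (g i))" "\<And>i. f i \<in> derivations MA"
    "\<And>i. g i \<in> Lset MS UNIV" "summable_fam f"
    using X1 unfolding ltensor_def by blast
  obtain s where s: "\<And>i. g i = MS (s i)" using Lset_obtain[of g UNIV] fg(3) by blast
  obtain h where h: "X = opsum (\<lambda>\<gamma>. optens \<gamma> (h \<gamma>))" "\<And>\<gamma>. \<gamma> \<in> BC \<Longrightarrow> h \<gamma> \<in> derivations MS"
    "\<And>\<gamma>. \<gamma> \<notin> BC \<Longrightarrow> h \<gamma> = (\<lambda>_. 0)" "summable_fam h"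
    using X2 unfolding rtensor_def by blast
  have lf: "lm (f i)" for i using fg(2) der_lm by blast
  have lX: "lm X" unfolding fg(1)
    by (rule lm_opsum[OF summable_optens1[OF fg(4)] lm_optens])
  have e0: "X (tens x e) = 0" for x
  proof -
    have "optens \<gamma> (h \<gamma>) (tens x e) = 0" for \<gamma>
    proof (cases "\<gamma> \<in> BC")
      case True
      then have "lm \<gamma>" "lm (h \<gamma>)" "h \<gamma> e = 0" using BC_cen cen_lm h(2) der_lm der_e by blast+
      then show ?thesis by (simp add: optens_tens)
    qed (simp add: h(3))
    then show ?thesis by (simp add: h(1) opsum_def)
  qed
  have "X (tens x t) = 0" for x t
  proof -
    let ?K = "{i. f i x \<noteq> 0}"
    have fK: "finite ?K" using fg(4) by (simp add: summable_fam_def)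
    let ?R = "optens (\<lambda>y. y) (\<lambda>v. MS v t)"
    have "X (tens x t) = (\<Sum>i\<in>?K. tens (f i x) (MS (s i) t))"
      unfolding fg(1) by (subst opsum_super'[OF fK]) (auto simp: optens_tens[OF lf lmS2] s)
    also have "\<dots> = (\<Sum>i\<in>?K. ?R (tens (f i x) (MS (s i) e)))"
      by (simp add: optens_tens[OF lm_id lmS1] e_right)
    also have "\<dots> = ?R (\<Sum>i\<in>?K. tens (f i x) (MS (s i) e))" by (simp add: lm_sum[OF lm_optens])
    also have "(\<Sum>i\<in>?K. tens (f i x) (MS (s i) e)) = X (tens x e)"
      unfolding fg(1) by (subst opsum_super'[OF fK]) (auto simp: optens_tens[OF lf lmS2] s)
    finally show ?thesis by (simp add: e0 lm_0[OF lm_optens])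
  qed
  then show ?thesis using lm_ext2[OF lX lm_zero] by simp
qed

end



definition slice :: "'b \<Rightarrow> ('a \<times> 'b, 'k::zero) vec \<Rightarrow> ('a,'k) vec" where
  "slice r w = Abs_poly_mapping (\<lambda>a. Poly_Mapping.lookup w (a, r))"

lemma slice_fin: "finite {a. Poly_Mapping.lookup w (a, r) \<noteq> 0}"
proof -
  have "finite (fst ` Poly_Mapping.keys w)" by simp
  moreover have "{a. Poly_Mapping.lookup w (a, r) \<noteq> 0} \<subseteq> fst ` Poly_Mapping.keys w" by (force simp: in_keys_iff)
  ultimately show ?thesis by (rule finite_subset[rotated])
qed

lemma lookup_slice: "Poly_Mapping.lookup (slice r w) a = Poly_Mapping.lookup w (a, r)"
  by (simp add: slice_def lookup_Abs_poly_mapping[OF slice_fin])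

lemma lm_slice: "lm (slice r)"
  by (simp add: lm_def) (auto intro!: poly_mapping_eqI simp: lookup_slice lookup_add)

lemma slice_tens: "slice r (tens x s) = sc (Poly_Mapping.lookup s r) x"
  by (rule poly_mapping_eqI) (simp add: lookup_slice lookup_tens mult.commute)

lemma slice_decomp: "w = (\<Sum>r\<in>snd ` Poly_Mapping.keys w. tens (slice r w) (ebas r))"
proof (rule poly_mapping_eqI)
  fix q :: "'a \<times> 'b"
  obtain a p where q: "q = (a, p)" by (cases q)
  have "Poly_Mapping.lookup (\<Sum>r\<in>snd ` Poly_Mapping.keys w. tens (slice r w) (ebas r)) q =
     (\<Sum>r\<in>snd ` Poly_Mapping.keys w. if r = p then Poly_Mapping.lookup w (a, p) else 0)"
    unfolding q lookup_sum by (rule sum.cong) (auto simp: lookup_tens lookup_slice lookup_ebas)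
  also have "\<dots> = Poly_Mapping.lookup w q"
  proof (cases "p \<in> snd ` Poly_Mapping.keys w")
    case False
    then have "(a, p) \<notin> Poly_Mapping.keys w" by force
    then show ?thesis using False by (simp add: q in_keys_iff)
  next
    case True
    then show ?thesis by (simp add: q)
  qed
  finally show "Poly_Mapping.lookup w q = Poly_Mapping.lookup (\<Sum>r\<in>snd ` Poly_Mapping.keys w. tens (slice r w) (ebas r)) q" by simp
qed

lemma slice_nz: "slice r w \<noteq> 0 \<Longrightarrow> r \<in> snd ` Poly_Mapping.keys w"
proof -
  assume "slice r w \<noteq> 0"
  then obtain a where "Poly_Mapping.lookup (slice r w) a \<noteq> 0"
    by (metis lookup_zero poly_mapping_eqI)
  then have "(a, r) \<in> Poly_Mapping.keys w" by (simp add: lookup_slice in_keys_iff)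
  then show ?thesis by force
qed

lemma der_diff: "bilin M \<Longrightarrow> d \<in> derivations M \<Longrightarrow> d' \<in> derivations M \<Longrightarrow> (\<lambda>x. d x - d' x) \<in> derivations M"
  by (simp add: derivations_def lin_lm lm_minus lm_diff[OF bilin_lm1] lm_diff[OF bilin_lm2] algebra_simps)

lemma commutator_cen:
  assumes B: "bilin M" and D: "D \<in> derivations M" and C: "C \<in> centroid M"
  shows "(\<lambda>u. D (C u) - C (D u)) \<in> centroid M"
proof -
  have lD: "lm D" and lC: "lm C" using D C by (auto simp: derivations_def centroid_def lin_lm)
  have d: "D (M x y) = M (D x) y + M x (D y)" for x y using D by (simp add: derivations_def)
  have c1: "C (M x y) = M (C x) y" and c2: "C (M x y) = M x (C y)" for x y
    using C unfolding centroid_def by blast+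
  have "(\<lambda>u. D (C u) - C (D u)) (M x y) = M ((\<lambda>u. D (C u) - C (D u)) x) y" for x y
    by (simp add: c1 d lm_add[OF lC] c2[of x "D y"] lm_diff[OF bilin_lm1[OF B]])
  moreover have "(\<lambda>u. D (C u) - C (D u)) (M x y) = M x ((\<lambda>u. D (C u) - C (D u)) y)" for x y
    by (simp add: c2 d lm_add[OF lC] c1[of "D x" y] lm_diff[OF bilin_lm2[OF B]])
  ultimately show ?thesis
    by (simp add: centroid_def lin_lm lm_minus lm_comp lD lC)
qed

context L31 begin

lemma BC_lm: "\<gamma> \<in> BC \<Longrightarrow> lm \<gamma>" using BC_cen cen_lm by blast

lemma basis_span: "is_basis E B \<Longrightarrow> T \<in> E \<Longrightarrow> \<exists>F c. finite F \<and> F \<subseteq> B \<and> T = (\<lambda>x. \<Sum>f\<in>F. sc (c f) (f x))"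
proof -
  assume "is_basis E B" "T \<in> E"
  have "\<forall>T\<in>E. \<exists>F c. finite F \<and> F \<subseteq> B \<and> T = (\<lambda>x. \<Sum>f\<in>F. sc (c f) (f x))"
    using \<open>is_basis E B\<close> unfolding is_basis_def by (rule conjunct2[THEN conjunct2])
  then show ?thesis using \<open>T \<in> E\<close> by (rule bspec)
qed

lemma basis_indep: "is_basis E B \<Longrightarrow> finite F \<Longrightarrow> F \<subseteq> B \<Longrightarrow> (\<lambda>x. \<Sum>f\<in>F. sc (c f) (f x)) = (\<lambda>x. 0) \<Longrightarrow> \<forall>f\<in>F. c f = 0"
proof -
  assume a: "is_basis E B" "finite F" "F \<subseteq> B" "(\<lambda>x. \<Sum>f\<in>F. sc (c f) (f x)) = (\<lambda>x. 0)"
  have "\<forall>F c. finite F \<and> F \<subseteq> B \<and> (\<lambda>x. \<Sum>f\<in>F. sc (c f) (f x)) = (\<lambda>x. 0) \<longrightarrow> (\<forall>f\<in>F. c f = 0)"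
    using a(1) unfolding is_basis_def by (rule conjunct2[THEN conjunct1])
  then show ?thesis using a(2-4) by blast
qed

lemma uniq:
  assumes F: "finite F" "F \<subseteq> BC" and Z: "\<And>x. (\<Sum>f\<in>F. tens (f x) (c f)) = 0"
  shows "\<forall>f\<in>F. c f = 0"
proof
  fix f0 assume f0: "f0 \<in> F"
  show "c f0 = 0"
  proof (rule poly_mapping_eqI)
    fix p
    have "(\<lambda>x. \<Sum>f\<in>F. sc (Poly_Mapping.lookup (c f) p) (f x)) = (\<lambda>x. 0)"
    proof
      fix x
      show "(\<Sum>f\<in>F. sc (Poly_Mapping.lookup (c f) p) (f x)) = 0"
      proof (rule poly_mapping_eqI)
        fix a
        have "Poly_Mapping.lookup (\<Sum>f\<in>F. tens (f x) (c f)) (a, p) = 0" using Z by simp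
        then show "Poly_Mapping.lookup (\<Sum>f\<in>F. sc (Poly_Mapping.lookup (c f) p) (f x)) a = Poly_Mapping.lookup 0 a"
          by (simp add: lookup_sum lookup_tens mult.commute)
      qed
    qed
    then have "\<forall>f\<in>F. Poly_Mapping.lookup (c f) p = 0"
      by (rule basis_indep[OF basisC F])
    then show "Poly_Mapping.lookup (c f0) p = Poly_Mapping.lookup 0 p" using f0 by simp
  qed
qed

lemma list_rep:
  assumes "\<forall>(\<gamma>, t)\<in>set ps. \<gamma> \<in> centroid MA"
  shows "\<exists>F H. finite F \<and> F \<subseteq> BC \<and> (\<forall>x. sum_list (map (\<lambda>(\<gamma>, t). tens (\<gamma> x) t) ps) = (\<Sum>f\<in>F. tens (f x) (H f)))"
  using assms
proof (induction ps)
  case Nil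
  show ?case by (rule exI[of _ "{}"]) simp
next
  case (Cons pr ps)
  obtain \<gamma> t where pr: "pr = (\<gamma>, t)" by (cases pr)
  have g: "\<gamma> \<in> centroid MA" using Cons.prems pr by auto
  obtain F' H' where FH': "finite F'" "F' \<subseteq> BC" "\<And>x. sum_list (map (\<lambda>(\<gamma>, t). tens (\<gamma> x) t) ps) = (\<Sum>f\<in>F'. tens (f x) (H' f))"
    using Cons by auto
  obtain Fg cg where Fg: "finite Fg" "Fg \<subseteq> BC" "\<gamma> = (\<lambda>x. \<Sum>f\<in>Fg. sc (cg f) (f x))"
    using basis_span[OF basisC g] by blast
  define H where "H f = (if f \<in> Fg then sc (cg f) t else 0) + (if f \<in> F' then H' f else 0)" for f
  show ?case
  proof (intro exI conjI allI)
    show "finite (Fg \<union> F')" using Fg FH' by simp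
    show "Fg \<union> F' \<subseteq> BC" using Fg FH' by simp
    fix x
    have 1: "tens (\<gamma> x) t = (\<Sum>f\<in>Fg \<union> F'. tens (f x) (if f \<in> Fg then sc (cg f) t else 0))"
    proof -
      have "tens (\<gamma> x) t = (\<Sum>f\<in>Fg. tens (f x) (if f \<in> Fg then sc (cg f) t else 0))"
        by (simp add: Fg(3) tens_sum1 tens_sc1 tens_sc2)
      also have "\<dots> = (\<Sum>f\<in>Fg \<union> F'. tens (f x) (if f \<in> Fg then sc (cg f) t else 0))"
        by (rule sum.mono_neutral_left) (use Fg FH' in auto)
      finally show ?thesis .
    qed
    have 2: "(\<Sum>f\<in>F'. tens (f x) (H' f)) = (\<Sum>f\<in>Fg \<union> F'. tens (f x) (if f \<in> F' then H' f else 0))"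
    proof -
      have "(\<Sum>f\<in>F'. tens (f x) (H' f)) = (\<Sum>f\<in>F'. tens (f x) (if f \<in> F' then H' f else 0))" by simp
      also have "\<dots> = (\<Sum>f\<in>Fg \<union> F'. tens (f x) (if f \<in> F' then H' f else 0))"
        by (rule sum.mono_neutral_left) (use Fg FH' in auto)
      finally show ?thesis .
    qed
    show "sum_list (map (\<lambda>(\<gamma>, t). tens (\<gamma> x) t) (pr # ps)) = (\<Sum>f\<in>Fg \<union> F'. tens (f x) (H f))"
      by (simp add: pr FH'(3) 1 2 H_def tens_add2 sum.distrib)
  qed
qed

lemma lin_rep_unique:
  assumes "finite G" "G \<subseteq> BC" "\<And>x. (\<Sum>f\<in>G. tens (f x) (a f)) = (\<Sum>f\<in>G. tens (f x) (b f))"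
  shows "\<forall>f\<in>G. a f = b f"
proof -
  have "\<forall>f\<in>G. a f - b f = 0"
    by (rule uniq[OF assms(1,2)]) (simp add: tens_minus2 sum_subtractf assms(3))
  then show ?thesis by simp
qed

theorem decomp:
  assumes d: "d \<in> derivations MT"
  shows "\<exists>X Y. X \<in> ltensor (derivations MA) (Lset MS UNIV) \<and> Y \<in> rtensor BC (derivations MS)
    \<and> d = (\<lambda>u. X u + Y u)"
proof -
  have ld: "lm d" using d der_lm by blast
  define dr where "dr r x = slice r (d (tens x e))" for r x
  have lm_dr: "lm (dr r)" for r unfolding dr_def[abs_def]
    by (rule lm_comp[OF lm_slice lm_comp[OF ld lm_tens1]])
  have sl1: "slice r (MT w (tens y e)) = MA (slice r w) y" for r w y
    by (rule lm_ext2'[of "\<lambda>w. slice r (MT w (tens y e))" "\<lambda>w. MA (slice r w) y"])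
       (auto intro: lm_comp lm_slice lmT1 lmA1 simp: MT_tens e_right slice_tens lm_sc[OF lmA1])
  have sl2: "slice r (MT (tens x e) w) = MA x (slice r w)" for r w x
    by (rule lm_ext2'[of "\<lambda>w. slice r (MT (tens x e) w)" "\<lambda>w. MA x (slice r w)"])
       (auto intro: lm_comp lm_slice lmT2 lmA2 simp: MT_tens e_left slice_tens lm_sc[OF lmA2])
  have dr_der: "dr r \<in> derivations MA" for r
  proof -
    have "dr r (MA x y) = MA (dr r x) y + MA x (dr r y)" for x y
    proof -
      have "d (tens (MA x y) e) = d (MT (tens x e) (tens y e))" by (simp add: MT_tens e_left)
      also have "\<dots> = MT (d (tens x e)) (tens y e) + MT (tens x e) (d (tens y e))"
        using d by (simp add: derivations_def)
      finally show ?thesis by (simp add: dr_def lm_add[OF lm_slice] sl1 sl2)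
    qed
    then show ?thesis using lm_dr by (simp add: derivations_def lin_lm)
  qed
  have dr_sum: "summable_fam dr"
    unfolding summable_fam_def
  proof
    fix x
    have "{r. dr r x \<noteq> 0} \<subseteq> snd ` Poly_Mapping.keys (d (tens x e))"
      using slice_nz by (auto simp: dr_def)
    then show "finite {r. dr r x \<noteq> 0}" by (rule finite_subset) simp
  qed
  define X where "X = opsum (\<lambda>r. optens (dr r) (MS (ebas r)))"
  have sumX: "summable_fam (\<lambda>r. optens (dr r) (MS (ebas r)))" by (rule summable_optens1[OF dr_sum])
  have X_in: "X \<in> ltensor (derivations MA) (Lset MS UNIV)"
    unfolding X_def
    by (rule ltensor_gen[OF dr_sum dr_der]) (auto simp: Lset_def intro: der_zero[OF A_alg])
  have X_der: "X \<in> derivations MT"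
    unfolding X_def by (rule der_opsum[OF sumX der_optens_L[OF dr_der] bilin_tmult])
  have Xe: "X (tens x e) = d (tens x e)" for x
  proof -
    let ?R = "snd ` Poly_Mapping.keys (d (tens x e))"
    have "X (tens x e) = (\<Sum>r\<in>?R. optens (dr r) (MS (ebas r)) (tens x e))"
      unfolding X_def
    proof (rule opsum_super')
      fix r assume "r \<notin> ?R"
      have "dr r x = 0"
      proof (rule ccontr)
        assume "dr r x \<noteq> 0"
        then have "r \<in> ?R" unfolding dr_def by (rule slice_nz)
        with \<open>r \<notin> ?R\<close> show False by contradiction
      qed
      then show "optens (dr r) (MS (ebas r)) (tens x e) = 0" by (simp add: optens_tens[OF lm_dr lmS2])
    qed simp
    also have "\<dots> = (\<Sum>r\<in>?R. tens (slice r (d (tens x e))) (ebas r))"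
      by (simp add: optens_tens[OF lm_dr lmS2] e_right dr_def)
    also have "\<dots> = d (tens x e)" by (rule slice_decomp[symmetric])
    finally show ?thesis .
  qed
  define D where "D u = d u - X u" for u
  have D_der: "D \<in> derivations MT" unfolding D_def[abs_def] by (rule der_diff[OF bilin_tmult d X_der])
  have lD: "lm D" using D_der der_lm by blast
  have De: "D (tens x e) = 0" for x by (simp add: D_def Xe)
  have idC: "(\<lambda>x. x) \<in> centroid MA" by (simp add: centroid_def lin_lm)
  have rep: "\<exists>F H. finite F \<and> F \<subseteq> BC \<and> (\<forall>x. D (tens x s) = (\<Sum>f\<in>F. tens (f x) (H f)))" for s
  proof -
    let ?L = "optens (\<lambda>x. x) (MS s)"
    have LC: "?L \<in> centroid MT" using psi idC by (simp add: psi_iso_def)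
    have GC: "(\<lambda>u. D (?L u) - ?L (D u)) \<in> centroid MT" by (rule commutator_cen[OF bilin_tmult D_der LC])
    then obtain ps where ps: "\<forall>(\<gamma>, t)\<in>set ps. \<gamma> \<in> centroid MA"
      "(\<lambda>u. D (?L u) - ?L (D u)) = (\<lambda>u. sum_list (map (\<lambda>(\<gamma>, t). optens \<gamma> (MS t) u) ps))"
      using psi unfolding psi_iso_def by blast
    have Deq: "D (tens x s) = sum_list (map (\<lambda>(\<gamma>, t). tens (\<gamma> x) t) ps)" for x
    proof -
      have "D (tens x s) = D (?L (tens x e)) - ?L (D (tens x e))"
        by (simp add: optens_tens[OF lm_id lmS2] e_right De lm_0[OF lm_optens])
      also have "\<dots> = sum_list (map (\<lambda>(\<gamma>, t). optens \<gamma> (MS t) (tens x e)) ps)"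
        using fun_cong[OF ps(2), of "tens x e"] by simp
      also have "\<dots> = sum_list (map (\<lambda>(\<gamma>, t). tens (\<gamma> x) t) ps)"
      proof (rule arg_cong[where f=sum_list], rule map_cong[OF refl])
        fix pr assume "pr \<in> set ps"
        then obtain \<gamma> t where pr: "pr = (\<gamma>, t)" "\<gamma> \<in> centroid MA" using ps(1) by (cases pr) auto
        then show "(\<lambda>(\<gamma>, t). optens \<gamma> (MS t) (tens x e)) pr = (\<lambda>(\<gamma>, t). tens (\<gamma> x) t) pr"
          by (simp add: optens_tens[OF cen_lm[OF pr(2)] lmS2] e_right)
      qed
      finally show ?thesis .
    qed
    obtain F H where FH0: "finite F" "F \<subseteq> BC" "\<forall>x. sum_list (map (\<lambda>(\<gamma>, t). tens (\<gamma> x) t) ps) = (\<Sum>f\<in>F. tens (f x) (H f))"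
      using list_rep[OF ps(1)] by blast
    show ?thesis by (intro exI[of _ F] exI[of _ H] conjI allI) (simp_all add: Deq FH0)
  qed
  obtain Fs Hs where FH: "\<And>s. finite (Fs s)" "\<And>s. Fs s \<subseteq> BC" "\<And>s x. D (tens x s) = (\<Sum>f\<in>Fs s. tens (f x) (Hs s f))"
  proof -
    have "\<forall>s. \<exists>FH. finite (fst FH) \<and> fst FH \<subseteq> BC \<and> (\<forall>x. D (tens x s) = (\<Sum>f\<in>fst FH. tens (f x) (snd FH f)))"
      using rep by fastforce
    then obtain FH where "\<forall>s. finite (fst (FH s)) \<and> fst (FH s) \<subseteq> BC \<and> (\<forall>x. D (tens x s) = (\<Sum>f\<in>fst (FH s). tens (f x) (snd (FH s) f)))"
      by (rule choice[THEN exE])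
    then show ?thesis using that[of "\<lambda>s. fst (FH s)" "\<lambda>s. snd (FH s)"] by blast
  qed
  define h where "h f s = (if f \<in> Fs s then Hs s f else 0)" for f s
  have repG: "D (tens x s) = (\<Sum>f\<in>G. tens (f x) (h f s))" if "finite G" "Fs s \<subseteq> G" for G s x
  proof -
    have "D (tens x s) = (\<Sum>f\<in>Fs s. tens (f x) (h f s))" by (simp add: FH(3) h_def)
    also have "\<dots> = (\<Sum>f\<in>G. tens (f x) (h f s))"
      by (rule sum.mono_neutral_left) (use that in \<open>auto simp: h_def\<close>)
    finally show ?thesis .
  qed
  have h0: "f \<notin> Fs s \<Longrightarrow> h f s = 0" for f s by (simp add: h_def)
  have h_add: "h f (s + t) = h f s + h f t" for f s t
  proof -
    let ?G = "Fs (s + t) \<union> Fs s \<union> Fs t"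
    have fG: "finite ?G" "?G \<subseteq> BC" using FH by auto
    have "\<forall>f\<in>?G. h f (s + t) = h f s + h f t"
    proof (rule lin_rep_unique[OF fG])
      fix x
      have "D (tens x (s + t)) = D (tens x s) + D (tens x t)" by (simp add: tens_add2 lm_add[OF lD])
      moreover have "D (tens x (s + t)) = (\<Sum>f\<in>?G. tens (f x) (h f (s + t)))"
        "D (tens x s) = (\<Sum>f\<in>?G. tens (f x) (h f s))" "D (tens x t) = (\<Sum>f\<in>?G. tens (f x) (h f t))"
        by (rule repG[OF fG(1)], blast)+
      ultimately show "(\<Sum>f\<in>?G. tens (f x) (h f (s + t))) = (\<Sum>f\<in>?G. tens (f x) (h f s + h f t))"
        by (simp add: tens_add2 sum.distrib)
    qed
    then show ?thesis by (cases "f \<in> ?G") (auto simp: h0)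
  qed
  have h_sc: "h f (sc r s) = sc r (h f s)" for f r s
  proof -
    let ?G = "Fs (sc r s) \<union> Fs s"
    have fG: "finite ?G" "?G \<subseteq> BC" using FH by auto
    have "\<forall>f\<in>?G. h f (sc r s) = sc r (h f s)"
    proof (rule lin_rep_unique[OF fG])
      fix x
      have "D (tens x (sc r s)) = sc r (D (tens x s))" by (simp add: tens_sc2 lm_sc[OF lD])
      moreover have "D (tens x (sc r s)) = (\<Sum>f\<in>?G. tens (f x) (h f (sc r s)))"
        "D (tens x s) = (\<Sum>f\<in>?G. tens (f x) (h f s))"
        by (rule repG[OF fG(1)], blast)+
      ultimately show "(\<Sum>f\<in>?G. tens (f x) (h f (sc r s))) = (\<Sum>f\<in>?G. tens (f x) (sc r (h f s)))"
        by (simp add: tens_sc2 sc_sum)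
    qed
    then show ?thesis by (cases "f \<in> ?G") (auto simp: h0)
  qed
  have lm_h: "lm (h f)" for f by (simp add: lm_def h_add h_sc)
  have h_der: "h f \<in> derivations MS" for f
  proof -
    have "h f (MS s t) = MS (h f s) t + MS s (h f t)" for s t
    proof -
      let ?G = "Fs (MS s t) \<union> Fs s \<union> Fs t"
      have fG: "finite ?G" "?G \<subseteq> BC" using FH by auto
      let ?c = "\<lambda>f. h f (MS s t) - (MS (h f s) t + MS s (h f t))"
      have Z2: "(\<Sum>f\<in>?G. tens (f (MA x y)) (?c f)) = 0" for x y
      proof -
        have "D (tens (MA x y) (MS s t)) = D (MT (tens x s) (tens y t))" by (simp add: MT_tens)
        also have "\<dots> = MT (D (tens x s)) (tens y t) + MT (tens x s) (D (tens y t))"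
          using D_der by (simp add: derivations_def)
        also have "\<dots> = (\<Sum>f\<in>?G. tens (f (MA x y)) (MS (h f s) t + MS s (h f t)))"
        proof -
          have cf: "f (MA x y) = MA (f x) y" "f (MA x y) = MA x (f y)" if "f \<in> ?G" for f
            using that fG BC_cen unfolding centroid_def by blast+
          have r1: "D (tens x s) = (\<Sum>f\<in>?G. tens (f x) (h f s))" by (rule repG[OF fG(1)]) blast
          have r2: "D (tens y t) = (\<Sum>f\<in>?G. tens (f y) (h f t))" by (rule repG[OF fG(1)]) blast
          have "MT (D (tens x s)) (tens y t) + MT (tens x s) (D (tens y t)) =
             (\<Sum>f\<in>?G. MT (tens (f x) (h f s)) (tens y t)) + (\<Sum>f\<in>?G. MT (tens x s) (tens (f y) (h f t)))"
            by (simp only: r1 r2 lm_sum[OF lmT1] lm_sum[OF lmT2])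
          also have "\<dots> = (\<Sum>f\<in>?G. tens (MA (f x) y) (MS (h f s) t) + tens (MA x (f y)) (MS s (h f t)))"
            by (simp add: MT_tens sum.distrib)
          also have "\<dots> = (\<Sum>f\<in>?G. tens (f (MA x y)) (MS (h f s) t + MS s (h f t)))"
          proof (rule sum.cong[OF refl])
            fix f assume fG': "f \<in> ?G"
            show "tens (MA (f x) y) (MS (h f s) t) + tens (MA x (f y)) (MS s (h f t)) = tens (f (MA x y)) (MS (h f s) t + MS s (h f t))"
              by (simp only: tens_add2 cf(1)[OF fG', symmetric] cf(2)[OF fG', symmetric])
          qed
          finally show ?thesis .
        qed
        finally have "D (tens (MA x y) (MS s t)) = (\<Sum>f\<in>?G. tens (f (MA x y)) (MS (h f s) t + MS s (h f t)))" .
        moreover have "D (tens (MA x y) (MS s t)) = (\<Sum>f\<in>?G. tens (f (MA x y)) (h f (MS s t)))"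
          by (rule repG[OF fG(1)]) blast
        ultimately show ?thesis by (simp add: tens_minus2 sum_subtractf)
      qed
      have Z: "(\<Sum>f\<in>?G. tens (f z) (?c f)) = 0" for z
      proof -
        obtain ps where z: "z = sum_list (map (\<lambda>(a, b). MA a b) ps)" using A_perfect perfect_def by blast
        have lmf: "lm (\<lambda>z. \<Sum>f\<in>?G. tens (f z) (?c f))"
          by (rule lm_sumf, rule lm_comp[OF lm_tens1 BC_lm]) (use fG in auto)
        have "(\<Sum>f\<in>?G. tens (f z) (?c f)) = sum_list (map (\<lambda>z. \<Sum>f\<in>?G. tens (f z) (?c f)) (map (\<lambda>(a, b). MA a b) ps))"
          unfolding z by (rule lm_sum_list[OF lmf])
        also have "\<dots> = 0" by (induction ps) (auto simp: Z2)
        finally show ?thesis .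
      qed
      have "\<forall>f\<in>?G. ?c f = 0" by (rule uniq[OF fG Z])
      then show ?thesis
        by (cases "f \<in> ?G") (auto simp: h0 lm_0[OF lmS1] lm_0[OF lmS2])
    qed
    then show ?thesis using lm_h by (simp add: derivations_def lin_lm)
  qed
  have h_out: "h f = (\<lambda>_. 0)" if "f \<notin> BC" for f
  proof
    fix s
    have "f \<notin> Fs s" using FH(2)[of s] that by blast
    then show "h f s = 0" by (simp add: h_def)
  qed
  have h_sum: "summable_fam h"
    unfolding summable_fam_def
  proof
    fix s show "finite {f. h f s \<noteq> 0}" using FH(1)[of s] by (rule finite_subset[rotated]) (auto simp: h_def split: if_splits)
  qed
  define Y where "Y = opsum (\<lambda>f. optens f (h f))"
  have Y_in: "Y \<in> rtensor BC (derivations MS)"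
    unfolding Y_def rtensor_def using h_der h_out h_sum by blast
  have lY: "lm Y" unfolding Y_def by (rule lm_opsum[OF summable_optens2[OF h_sum] lm_optens])
  have DY: "D = Y"
  proof (rule lm_ext2[OF lD lY])
    fix x s
    have "Y (tens x s) = (\<Sum>f\<in>Fs s. optens f (h f) (tens x s))"
      unfolding Y_def
    proof (rule opsum_super'[OF FH(1)])
      fix f assume "f \<notin> Fs s"
      show "optens f (h f) (tens x s) = 0"
      proof (cases "f \<in> BC")
        case True then show ?thesis using \<open>f \<notin> Fs s\<close> by (simp add: optens_tens[OF BC_lm lm_h] h0)
      qed (simp add: h_out)
    qed
    also have "\<dots> = (\<Sum>f\<in>Fs s. tens (f x) (h f s))"
    proof (rule sum.cong[OF refl])
      fix f assume "f \<in> Fs s"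
      then have "f \<in> BC" using FH(2) by blast
      then show "optens f (h f) (tens x s) = tens (f x) (h f s)" by (rule optens_tens[OF BC_lm lm_h])
    qed
    also have "\<dots> = D (tens x s)" by (rule repG[symmetric]) (use FH in auto)
    finally show "D (tens x s) = Y (tens x s)" by simp
  qed
  have "d = (\<lambda>u. X u + Y u)"
  proof
    fix u
    have "d u - X u = Y u" using fun_cong[OF DY, of u] by (simp add: D_def)
    then show "d u = X u + Y u" by (metis add.commute diff_add_cancel)
  qed
  then show ?thesis using X_in Y_in by blast
qed

end



lemma opsum_pairs:
  fixes m :: nat
  assumes S: "\<And>k. k < m \<Longrightarrow> summable_fam (H k)" and Z: "\<And>k i x. k \<ge> m \<Longrightarrow> H k i x = 0"
  shows "opsum (\<lambda>p. H (fst p) (snd p)) u = (\<Sum>k<m. opsum (H k) u)"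
proof -
  have set: "{p. H (fst p) (snd p) u \<noteq> 0} = Sigma {..<m} (\<lambda>k. {i. H k i u \<noteq> 0})"
  proof (intro set_eqI iffI)
    fix p assume "p \<in> {p. H (fst p) (snd p) u \<noteq> 0}"
    then have h: "H (fst p) (snd p) u \<noteq> 0" by simp
    have "fst p < m"
    proof (rule ccontr)
      assume "\<not> fst p < m"
      then have "H (fst p) (snd p) u = 0" by (intro Z) simp
      then show False using h by contradiction
    qed
    then show "p \<in> Sigma {..<m} (\<lambda>k. {i. H k i u \<noteq> 0})" using h by (cases p) auto
  qed auto
  have fin: "\<And>k. k \<in> {..<m} \<Longrightarrow> finite {i. H k i u \<noteq> 0}" using S by (simp add: summable_fam_def)
  have "opsum (\<lambda>p. H (fst p) (snd p)) u = (\<Sum>p\<in>Sigma {..<m} (\<lambda>k. {i. H k i u \<noteq> 0}). H (fst p) (snd p) u)"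
    unfolding opsum_def set ..
  also have "\<dots> = (\<Sum>k<m. \<Sum>i\<in>{i. H k i u \<noteq> 0}. H k i u)"
  proof -
    have "(\<Sum>k<m. \<Sum>i\<in>{i. H k i u \<noteq> 0}. H k i u) = (\<Sum>(k, i)\<in>Sigma {..<m} (\<lambda>k. {i. H k i u \<noteq> 0}). H k i u)"
      by (rule sum.Sigma) (use fin in auto)
    then show ?thesis by (simp add: case_prod_beta)
  qed
  also have "\<dots> = (\<Sum>k<m. opsum (H k) u)" by (simp add: opsum_def)
  finally show ?thesis .
qed

lemma summable_pairs:
  fixes m :: nat
  assumes S: "\<And>k. k < m \<Longrightarrow> summable_fam (H k)" and Z: "\<And>k i x. k \<ge> m \<Longrightarrow> H k i x = 0"
  shows "summable_fam (\<lambda>p. H (fst p) (snd p))"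
  unfolding summable_fam_def
proof
  fix u
  have "{p. H (fst p) (snd p) u \<noteq> 0} \<subseteq> Sigma {..<m} (\<lambda>k. {i. H k i u \<noteq> 0})"
  proof
    fix p assume "p \<in> {p. H (fst p) (snd p) u \<noteq> 0}"
    then have h: "H (fst p) (snd p) u \<noteq> 0" by simp
    have "fst p < m"
    proof (rule ccontr)
      assume "\<not> fst p < m"
      then have "H (fst p) (snd p) u = 0" by (intro Z) simp
      then show False using h by contradiction
    qed
    then show "p \<in> Sigma {..<m} (\<lambda>k. {i. H k i u \<noteq> 0})" using h by (cases p) auto
  qed
  moreover have "finite (Sigma {..<m} (\<lambda>k. {i. H k i u \<noteq> 0}))"
    using S by (intro finite_SigmaI) (auto simp: summable_fam_def)
  ultimately show "finite {p. H (fst p) (snd p) u \<noteq> 0}" by (rule finite_subset)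
qed

lemma opsum_fsum:
  assumes fA: "finite A" and S: "\<And>k. k \<in> A \<Longrightarrow> summable_fam (H k)"
  shows "opsum (\<lambda>i x. \<Sum>k\<in>A. H k i x) u = (\<Sum>k\<in>A. opsum (H k) u)"
proof -
  let ?G = "\<Union>k\<in>A. {i. H k i u \<noteq> 0}"
  have fG: "finite ?G" using fA S by (auto simp: summable_fam_def)
  have "opsum (\<lambda>i x. \<Sum>k\<in>A. H k i x) u = (\<Sum>i\<in>?G. \<Sum>k\<in>A. H k i u)"
    by (rule opsum_super'[OF fG]) (auto intro: sum.neutral)
  also have "\<dots> = (\<Sum>k\<in>A. \<Sum>i\<in>?G. H k i u)" by (rule sum.swap)
  also have "\<dots> = (\<Sum>k\<in>A. opsum (H k) u)"
    by (rule sum.cong[OF refl], rule opsum_super'[OF fG, symmetric]) auto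
  finally show ?thesis .
qed

context L31 begin

lemma LT_sum:
  assumes T: "\<And>k. k < m \<Longrightarrow> T k \<in> ltensor (EV k) (EW k)"
    and EV: "\<And>k. EV k \<subseteq> derivations MA" and EW: "\<And>k. EW k \<subseteq> Lset MS UNIV"
  shows "(\<lambda>u. \<Sum>k<m. T k u) \<in> ltensor (derivations MA) (Lset MS UNIV)"
proof -
  have "\<forall>k. \<exists>fg :: ('a \<times> nat \<Rightarrow> ('a,'k) op) \<times> ('a \<times> nat \<Rightarrow> ('b,'k) op). k < m \<longrightarrow> T k = opsum (\<lambda>i. optens (fst fg i) (snd fg i)) \<and> (\<forall>i. fst fg i \<in> EV k) \<and> (\<forall>i. snd fg i \<in> EW k) \<and> summable_fam (fst fg)"
  proof
    fix k
    show "\<exists>fg :: ('a \<times> nat \<Rightarrow> ('a,'k) op) \<times> ('a \<times> nat \<Rightarrow> ('b,'k) op). k < m \<longrightarrow> T k = opsum (\<lambda>i. optens (fst fg i) (snd fg i)) \<and> (\<forall>i. fst fg i \<in> EV k) \<and> (\<forall>i. snd fg i \<in> EW k) \<and> summable_fam (fst fg)"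
    proof (cases "k < m")
      case True
      then obtain f :: "'a \<times> nat \<Rightarrow> ('a,'k) op" and g :: "'a \<times> nat \<Rightarrow> ('b,'k) op" where "T k = opsum (\<lambda>i. optens (f i) (g i))" "\<forall>i. f i \<in> EV k" "\<forall>i. g i \<in> EW k" "summable_fam f"
        using T[OF True] unfolding ltensor_def by blast
      then show ?thesis by (intro exI[of _ "(f, g)"]) simp
    qed simp
  qed
  from choice[OF this] obtain fg :: "nat \<Rightarrow> ('a \<times> nat \<Rightarrow> ('a,'k) op) \<times> ('a \<times> nat \<Rightarrow> ('b,'k) op)" where FG: "\<forall>k. k < m \<longrightarrow> T k = opsum (\<lambda>i. optens (fst (fg k) i) (snd (fg k) i)) \<and> (\<forall>i. fst (fg k) i \<in> EV k) \<and> (\<forall>i. snd (fg k) i \<in> EW k) \<and> summable_fam (fst (fg k))"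
    by blast
  have fg: "\<And>k. k < m \<Longrightarrow> T k = opsum (\<lambda>i. optens (fst (fg k) i) (snd (fg k) i))"
    "\<And>k i. k < m \<Longrightarrow> fst (fg k) i \<in> EV k" "\<And>k i. k < m \<Longrightarrow> snd (fg k) i \<in> EW k"
    "\<And>k. k < m \<Longrightarrow> summable_fam (fst (fg k))"
    using FG by blast+
  define f where "f p = (if fst p < m then fst (fg (fst p)) (snd p) else (\<lambda>x. 0))" for p
  define g where "g p = (if fst p < m then snd (fg (fst p)) (snd p) else MS 0)" for p
  have Sf: "summable_fam f"
    unfolding f_def
    by (rule summable_pairs[where H="\<lambda>k i. if k < m then fst (fg k) i else (\<lambda>x. 0)", of m, simplified])
       (auto simp: fg(4))
  have "(\<lambda>u. \<Sum>k<m. T k u) = opsum (\<lambda>p. optens (f p) (g p))"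
  proof
    fix u
    have "opsum (\<lambda>p. optens (f p) (g p)) u =
        opsum (\<lambda>p. (\<lambda>k i. if k < m then optens (fst (fg k) i) (snd (fg k) i) else (\<lambda>x. 0)) (fst p) (snd p)) u"
      by (simp add: f_def g_def if_distrib[of "\<lambda>x. x u"] opsum_def cong: if_cong)
    also have "\<dots> = (\<Sum>k<m. opsum (\<lambda>i. if k < m then optens (fst (fg k) i) (snd (fg k) i) else (\<lambda>x. 0)) u)"
      by (rule opsum_pairs) (auto intro: summable_optens1 fg(4))
    also have "\<dots> = (\<Sum>k<m. T k u)" by (simp add: fg(1))
    finally show "(\<Sum>k<m. T k u) = opsum (\<lambda>p. optens (f p) (g p)) u" by simp
  qed
  moreover have "opsum (\<lambda>p. optens (f p) (g p)) \<in> ltensor (derivations MA) (Lset MS UNIV)"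
  proof (rule ltensor_gen[OF Sf])
    show "f i \<in> derivations MA" for i using fg(2)[of "fst i" "snd i"] EV[of "fst i"] by (auto simp: f_def intro: der_zero[OF A_alg])
    show "g i \<in> Lset MS UNIV" for i using fg(3)[of "fst i" "snd i"] EW[of "fst i"] by (auto simp: g_def Lset_def)
    show "(\<lambda>x. 0) \<in> derivations MA" by (rule der_zero[OF A_alg])
    show "MS 0 \<in> Lset MS UNIV" by (auto simp: Lset_def)
  qed
  ultimately show ?thesis by simp
qed

end



context L31 begin

lemma BCk_sub: "k < m \<Longrightarrow> BCk k \<subseteq> centroid MA \<inter> End_deg m \<omega> \<sigma>1 k"
  using basisCk by (auto simp: is_basis_def)

lemma ltensor_zero: fixes EV :: "('a,'k) op set" and EW :: "('b,'k) op set" shows "(\<lambda>x. 0) \<in> EV \<Longrightarrow> g0 \<in> EW \<Longrightarrow> (\<lambda>u. 0) \<in> ltensor EV EW"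
proof -
  assume a: "(\<lambda>x. 0) \<in> EV" "g0 \<in> EW"
  have "(\<lambda>u. 0) = opsum (\<lambda>i::'a \<times> nat. optens (\<lambda>x. 0) g0)" by (rule ext) (simp add: opsum_def)
  moreover have "summable_fam (\<lambda>i::'a \<times> nat. (\<lambda>x::('a,'k) vec. 0::('a,'k) vec))" by (simp add: summable_fam_def)
  ultimately show ?thesis unfolding ltensor_def
    by (intro CollectI exI[of _ "\<lambda>i::'a \<times> nat. \<lambda>x::('a,'k) vec. 0::('a,'k) vec"] exI[of _ "\<lambda>i::'a \<times> nat. g0"])
       (use a in auto)
qed

lemma rtensor_zero: fixes B :: "('a,'k) op set" and EW :: "('b,'k) op set" assumes "(\<lambda>x. 0) \<in> EW" shows "(\<lambda>u. 0) \<in> rtensor B EW"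
proof -
  have "(\<lambda>u. 0) = opsum (\<lambda>\<gamma>::('a,'k) op. optens \<gamma> (\<lambda>x::('b,'k) vec. 0::('b,'k) vec))" by (rule ext) (simp add: opsum_def)
  moreover have "summable_fam (\<lambda>\<gamma>::('a,'k) op. (\<lambda>x::('b,'k) vec. 0::('b,'k) vec))" by (simp add: summable_fam_def)
  ultimately show ?thesis unfolding rtensor_def
    by (intro CollectI exI[of _ "\<lambda>\<gamma>::('a,'k) op. \<lambda>x::('b,'k) vec. 0::('b,'k) vec"]) (use assms in auto)
qed

lemma LT_hom:
  assumes T: "T \<in> ltensor (derivations MA \<inter> End_deg m \<omega> \<sigma>1 k) (Lset MS (eigsp \<omega> \<sigma>2 l))"
  shows "T \<in> derivations MT \<and> T \<in> End_deg m \<omega> sig ((k + l) mod m)"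
proof -
  obtain f :: "'a \<times> nat \<Rightarrow> ('a,'k) op" and g :: "'a \<times> nat \<Rightarrow> ('b,'k) op" where
    fg: "T = opsum (\<lambda>i. optens (f i) (g i))" "\<And>i. f i \<in> derivations MA \<inter> End_deg m \<omega> \<sigma>1 k"
    "\<And>i. g i \<in> Lset MS (eigsp \<omega> \<sigma>2 l)" "summable_fam f"
    using T unfolding ltensor_def by blast
  obtain s where s: "\<And>i. g i = MS (s i) \<and> s i \<in> eigsp \<omega> \<sigma>2 l" using Lset_obtain[of g] fg(3) by blast
  have S: "summable_fam (\<lambda>i. optens (f i) (g i))" by (rule summable_optens1[OF fg(4)])
  have "T \<in> derivations MT" unfolding fg(1)
    by (rule der_opsum[OF S _ bilin_tmult]) (use fg(2) s der_optens_L in auto)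
  moreover have "T \<in> End_deg m \<omega> sig ((k + l) mod m)" unfolding fg(1)
    by (rule gT.End_opsum[OF S], rule optens_End) (use fg(2) s L_End in auto)
  ultimately show ?thesis ..
qed

lemma RT_hom:
  assumes T: "T \<in> rtensor (BCk k) (derivations MS \<inter> End_deg m \<omega> \<sigma>2 l)" and k: "k < m"
  shows "T \<in> derivations MT \<and> T \<in> End_deg m \<omega> sig ((k + l) mod m)"
proof -
  obtain g where g: "T = opsum (\<lambda>\<beta>. optens \<beta> (g \<beta>))" "\<And>\<beta>. \<beta> \<in> BCk k \<Longrightarrow> g \<beta> \<in> derivations MS \<inter> End_deg m \<omega> \<sigma>2 l"
    "\<And>\<beta>. \<beta> \<notin> BCk k \<Longrightarrow> g \<beta> = (\<lambda>_. 0)" "summable_fam g"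
    using T unfolding rtensor_def by blast
  have S: "summable_fam (\<lambda>\<beta>. optens \<beta> (g \<beta>))" by (rule summable_optens2[OF g(4)])
  have z: "\<beta> \<notin> BCk k \<Longrightarrow> optens \<beta> (g \<beta>) = (\<lambda>u. 0)" for \<beta> by (rule ext) (simp add: g(3))
  have "T \<in> derivations MT" unfolding g(1)
  proof (rule der_opsum[OF S _ bilin_tmult])
    fix \<beta> show "optens \<beta> (g \<beta>) \<in> derivations MT"
    proof (cases "\<beta> \<in> BCk k")
      case True
      then show ?thesis using g(2) BCk_sub[OF k] der_optens_C by blast
    qed (simp add: z der_zero[OF bilin_tmult])
  qed
  moreover have "T \<in> End_deg m \<omega> sig ((k + l) mod m)" unfolding g(1)
  proof (rule gT.End_opsum[OF S])
    fix \<beta> show "optens \<beta> (g \<beta>) \<in> End_deg m \<omega> sig ((k + l) mod m)"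
    proof (cases "\<beta> \<in> BCk k")
      case True
      then show ?thesis using g(2) BCk_sub[OF k] by (intro optens_End) auto
    qed (simp add: z gT.End_zero)
  qed
  ultimately show ?thesis ..
qed

lemma RT_sum:
  assumes T: "\<And>k. k < m \<Longrightarrow> T k \<in> rtensor (BCk k) (W k)" and W: "\<And>k. W k \<subseteq> derivations MS"
  shows "(\<lambda>u. \<Sum>k<m. T k u) \<in> rtensor BC (derivations MS)"
proof -
  define Q where "Q k gk \<longleftrightarrow> (k < m \<longrightarrow> T k = opsum (\<lambda>\<beta>. optens \<beta> (gk \<beta>)) \<and> (\<forall>\<beta>\<in>BCk k. gk \<beta> \<in> W k)
      \<and> (\<forall>\<beta>. \<beta> \<notin> BCk k \<longrightarrow> gk \<beta> = (\<lambda>_. 0)) \<and> summable_fam gk)" for k and gk :: "('a,'k) op \<Rightarrow> ('b,'k) op"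
  have "\<forall>k. \<exists>gk. Q k gk"
  proof
    fix k show "\<exists>gk. Q k gk"
    proof (cases "k < m")
      case True
      then show ?thesis using T[OF True] unfolding rtensor_def Q_def by blast
    qed (simp add: Q_def)
  qed
  then obtain g where "\<forall>k. Q k (g k)" by (rule choice[THEN exE]) blast
  then have g: "\<And>k. k < m \<Longrightarrow> T k = opsum (\<lambda>\<beta>. optens \<beta> (g k \<beta>))"
    "\<And>k \<beta>. k < m \<Longrightarrow> \<beta> \<in> BCk k \<Longrightarrow> g k \<beta> \<in> W k"
    "\<And>k \<beta>. k < m \<Longrightarrow> \<beta> \<notin> BCk k \<Longrightarrow> g k \<beta> = (\<lambda>_. 0)"
    "\<And>k. k < m \<Longrightarrow> summable_fam (g k)"
    unfolding Q_def by blast+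
  have "\<forall>\<beta>. \<exists>Fc. \<beta> \<in> centroid MA \<longrightarrow> finite (fst Fc) \<and> fst Fc \<subseteq> BC \<and> \<beta> = (\<lambda>x. \<Sum>f\<in>fst Fc. sc (snd Fc f) (f x))"
  proof
    fix \<beta> :: "('a,'k) op"
    show "\<exists>Fc. \<beta> \<in> centroid MA \<longrightarrow> finite (fst Fc) \<and> fst Fc \<subseteq> BC \<and> \<beta> = (\<lambda>x. \<Sum>f\<in>fst Fc. sc (snd Fc f) (f x))"
    proof (cases "\<beta> \<in> centroid MA")
      case True
      then obtain F c where "finite F" "F \<subseteq> BC" "\<beta> = (\<lambda>x. \<Sum>f\<in>F. sc (c f) (f x))"
        using basis_span[OF basisC] by blast
      then show ?thesis by (intro exI[of _ "(F, c)"]) simp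
    qed simp
  qed
  then obtain Fc where Fc: "\<And>\<beta>. \<beta> \<in> centroid MA \<Longrightarrow> finite (fst (Fc \<beta>)) \<and> fst (Fc \<beta>) \<subseteq> BC \<and> \<beta> = (\<lambda>x. \<Sum>f\<in>fst (Fc \<beta>). sc (snd (Fc \<beta>) f) (f x))"
    by (rule choice[THEN exE]) blast
  define valid where "valid p \<longleftrightarrow> fst p < m \<and> snd p \<in> BCk (fst p)" for p :: "nat \<times> ('a,'k) op"
  define \<phi> where "\<phi> p = (if valid p then snd p else (\<lambda>x. 0))" for p
  define gp where "gp p = (if fst p < m then g (fst p) (snd p) else (\<lambda>x. 0))" for p
  define Fp where "Fp p = (if valid p then fst (Fc (snd p)) else {})" for p
  define cp where "cp p = snd (Fc (snd p))" for p :: "nat \<times> ('a,'k) op"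
  have vc: "valid p \<Longrightarrow> snd p \<in> centroid MA" for p using BCk_sub by (auto simp: valid_def)
  have Sg: "summable_fam gp"
    unfolding gp_def by (rule summable_pairs[where H="\<lambda>k \<beta>. if k < m then g k \<beta> else (\<lambda>x. 0)", of m, simplified])
      (auto simp: g(4))
  have phi: "\<phi> p = (\<lambda>x. \<Sum>f\<in>Fp p. sc (cp p f) (f x))" for p
    using Fc[OF vc[of p]] by (auto simp: \<phi>_def Fp_def cp_def)
  have finF: "finite (Fp p)" for p using Fc[OF vc[of p]] by (auto simp: Fp_def)
  have FpB: "Fp p \<subseteq> BC" for p using Fc[OF vc[of p]] by (auto simp: Fp_def)
  define G where "G = (\<lambda>f. if f \<in> BC then opsum (\<lambda>p s. sc (if f \<in> Fp p then cp p f else 0) (gp p s)) else (\<lambda>s. 0))"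
  have reb: "opsum (\<lambda>p. optens (\<phi> p) (gp p)) = opsum (\<lambda>f. optens f (G f))" "summable_fam G"
    using rebase[where \<phi>=\<phi> and g=gp and F=Fp and c=cp and B=BC, OF Sg finF FpB phi] unfolding G_def by blast+
  have gp_der: "gp p \<in> derivations MS" for p
  proof (cases "valid p")
    case True then show ?thesis using g(2) W by (auto simp: gp_def valid_def)
  next
    case False
    then have "gp p = (\<lambda>x. 0)" using g(3) by (auto simp: gp_def valid_def)
    then show ?thesis using der_zero[OF S_alg] by simp
  qed
  have G_der: "G f \<in> derivations MS" if "f \<in> BC" for f
  proof -
    have S2: "summable_fam (\<lambda>p s. sc (if f \<in> Fp p then cp p f else 0) (gp p s))"
      unfolding summable_fam_def
    proof
      fix s
      have "{p. sc (if f \<in> Fp p then cp p f else 0) (gp p s) \<noteq> 0} \<subseteq> {p. gp p s \<noteq> 0}" by auto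
      then show "finite {p. sc (if f \<in> Fp p then cp p f else 0) (gp p s) \<noteq> 0}"
        using Sg finite_subset unfolding summable_fam_def by blast
    qed
    show ?thesis using that
      by (simp add: G_def) (rule der_opsum[OF S2 der_sc[OF S_alg gp_der] S_alg])
  qed
  have G_out: "f \<notin> BC \<Longrightarrow> G f = (\<lambda>_. 0)" for f by (simp add: G_def)
  have inR: "opsum (\<lambda>f. optens f (G f)) \<in> rtensor BC (derivations MS)"
    unfolding rtensor_def using G_der G_out reb(2) by blast
  have fam: "(\<lambda>p. optens (\<phi> p) (gp p)) = (\<lambda>p. (\<lambda>k \<beta>. if k < m then optens \<beta> (g k \<beta>) else (\<lambda>x. 0)) (fst p) (snd p))"
  proof (rule ext)+
    fix p u
    show "optens (\<phi> p) (gp p) u = (\<lambda>k \<beta>. if k < m then optens \<beta> (g k \<beta>) else (\<lambda>x. 0)) (fst p) (snd p) u"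
    proof (cases "valid p")
      case True then show ?thesis by (simp add: \<phi>_def gp_def valid_def)
    next
      case False
      show ?thesis
      proof (cases "fst p < m")
        case True
        then have "g (fst p) (snd p) = (\<lambda>_. 0)" using False g(3) by (auto simp: valid_def)
        then show ?thesis using True False by (simp add: \<phi>_def gp_def)
      qed (simp add: \<phi>_def gp_def valid_def)
    qed
  qed
  have "(\<lambda>u. \<Sum>k<m. T k u) = opsum (\<lambda>p. optens (\<phi> p) (gp p))"
  proof
    fix u
    have "opsum (\<lambda>p. optens (\<phi> p) (gp p)) u = (\<Sum>k<m. opsum (\<lambda>\<beta>. if k < m then optens \<beta> (g k \<beta>) else (\<lambda>x. 0)) u)"
      unfolding fam by (rule opsum_pairs) (auto intro: summable_optens2 g(4))
    also have "\<dots> = (\<Sum>k<m. T k u)" by (simp add: g(1))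
    finally show "(\<Sum>k<m. T k u) = opsum (\<lambda>p. optens (\<phi> p) (gp p)) u" by simp
  qed
  then show ?thesis using inR reb(1) by simp
qed

end



context grading begin

lemma comp_summable:
  assumes S: "summable_fam F"
  shows "summable_fam (\<lambda>i. comp (F i) k)"
  unfolding summable_fam_def
proof
  fix x
  have "{i. comp (F i) k x \<noteq> 0} \<subseteq> (\<Union>c<m. {i. F i (proj c x) \<noteq> 0})"
  proof
    fix i assume i: "i \<in> {i. comp (F i) k x \<noteq> 0}"
    show "i \<in> (\<Union>c<m. {i. F i (proj c x) \<noteq> 0})"
    proof (rule ccontr)
      assume "i \<notin> (\<Union>c<m. {i. F i (proj c x) \<noteq> 0})"
      then have "\<forall>c<m. F i (proj c x) = 0" by blast
      then have "comp (F i) k x = 0" unfolding comp_def by (simp add: lm_0[OF lm_proj])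
      then show False using i by simp
    qed
  qed
  moreover have "finite (\<Union>c<m. {i. F i (proj c x) \<noteq> 0})" using S by (simp add: summable_fam_def)
  ultimately show "finite {i. comp (F i) k x \<noteq> 0}" by (rule finite_subset)
qed

lemma comp_expand: "lm T \<Longrightarrow> T = (\<lambda>x. \<Sum>k<m. comp T k x)"
  by (rule ext) (simp add: comp_sum)

lemma proj_expand_fun: "lm T' \<Longrightarrow> T' s = (\<Sum>l<m. T' (proj l s))"
  by (rule lm_proj_expand)

end

context L31 begin

lemma LT_decomp:
  assumes X: "X \<in> ltensor (derivations MA) (Lset MS UNIV)"
  shows "\<exists>Z. (\<forall>k<m. \<forall>l<m. Z k l \<in> ltensor (derivations MA \<inter> End_deg m \<omega> \<sigma>1 k) (Lset MS (eigsp \<omega> \<sigma>2 l)))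
     \<and> (\<forall>u. X u = (\<Sum>k<m. \<Sum>l<m. Z k l u))"
proof -
  obtain f :: "'a \<times> nat \<Rightarrow> ('a,'k) op" and g :: "'a \<times> nat \<Rightarrow> ('b,'k) op" where
    fg: "X = opsum (\<lambda>i. optens (f i) (g i))" "\<And>i. f i \<in> derivations MA"
    "\<And>i. g i \<in> Lset MS UNIV" "summable_fam f"
    using X unfolding ltensor_def by blast
  obtain s where s: "\<And>i. g i = MS (s i)" using Lset_obtain[of g UNIV] fg(3) by blast
  have lf: "lm (f i)" for i using fg(2) der_lm by blast
  define Z where "Z k l = opsum (\<lambda>i. optens (gA.comp (f i) k) (MS (gS.proj l (s i))))" for k l
  have Sk: "summable_fam (\<lambda>i. gA.comp (f i) k)" for k by (rule gA.comp_summable[OF fg(4)])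
  have mem: "Z k l \<in> ltensor (derivations MA \<inter> End_deg m \<omega> \<sigma>1 k) (Lset MS (eigsp \<omega> \<sigma>2 l))" for k l
    unfolding ltensor_def Z_def
  proof (intro CollectI exI conjI allI)
    show "opsum (\<lambda>i. optens (gA.comp (f i) k) (MS (gS.proj l (s i)))) = opsum (\<lambda>i. optens (gA.comp (f i) k) (MS (gS.proj l (s i))))" ..
    show "gA.comp (f i) k \<in> derivations MA \<inter> End_deg m \<omega> \<sigma>1 k" for i
      using gA.comp_der[OF fg(2)] gA.comp_End[OF lf] by blast
    show "MS (gS.proj l (s i)) \<in> Lset MS (eigsp \<omega> \<sigma>2 l)" for i using gS.proj_V by (auto simp: Lset_def)
    show "summable_fam (\<lambda>i. gA.comp (f i) k)" by (rule Sk)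
  qed
  have "X u = (\<Sum>k<m. \<Sum>l<m. Z k l u)" for u
  proof -
    have A: "(\<lambda>i. optens (f i) (g i)) = (\<lambda>i x. \<Sum>k<m. optens (gA.comp (f i) k) (MS (s i)) x)"
    proof (intro ext)
      fix i x
      have "optens (f i) (g i) x = optens (\<lambda>y. \<Sum>k<m. gA.comp (f i) k y) (MS (s i)) x"
        by (subst gA.comp_expand[OF lf]) (simp add: s)
      then show "optens (f i) (g i) x = (\<Sum>k<m. optens (gA.comp (f i) k) (MS (s i)) x)"
        by (simp add: optens_sum1)
    qed
    have B: "(\<lambda>i. optens (gA.comp (f i) k) (MS (s i))) = (\<lambda>i x. \<Sum>l<m. optens (gA.comp (f i) k) (MS (gS.proj l (s i))) x)" for k
    proof (intro ext)
      fix i x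
      have "MS (s i) = (\<lambda>y. \<Sum>l<m. MS (gS.proj l (s i)) y)"
        by (rule ext) (rule gS.lm_proj_expand[OF lmS1])
      then show "optens (gA.comp (f i) k) (MS (s i)) x = (\<Sum>l<m. optens (gA.comp (f i) k) (MS (gS.proj l (s i))) x)"
        by (simp add: optens_sum2)
    qed
    have "X u = (\<Sum>k<m. opsum (\<lambda>i. optens (gA.comp (f i) k) (MS (s i))) u)"
      unfolding fg(1) A by (rule opsum_fsum) (auto intro: summable_optens1 Sk)
    also have "\<dots> = (\<Sum>k<m. \<Sum>l<m. Z k l u)"
      unfolding Z_def B by (rule sum.cong[OF refl], rule opsum_fsum) (auto intro: summable_optens1 Sk)
    finally show ?thesis .
  qed
  then show ?thesis using mem by blast
qed

lemma RT_decomp: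
  assumes Y: "Y \<in> rtensor BC (derivations MS)"
  shows "\<exists>W. (\<forall>k<m. \<forall>l<m. W k l \<in> rtensor (BCk k) (derivations MS \<inter> End_deg m \<omega> \<sigma>2 l))
     \<and> (\<forall>u. Y u = (\<Sum>k<m. \<Sum>l<m. W k l u))"
proof -
  obtain h where h: "Y = opsum (\<lambda>\<gamma>. optens \<gamma> (h \<gamma>))" "\<And>\<gamma>. \<gamma> \<in> BC \<Longrightarrow> h \<gamma> \<in> derivations MS"
    "\<And>\<gamma>. \<gamma> \<notin> BC \<Longrightarrow> h \<gamma> = (\<lambda>_. 0)" "summable_fam h"
    using Y unfolding rtensor_def by blast
  have hder: "h \<gamma> \<in> derivations MS" for \<gamma>
    by (cases "\<gamma> \<in> BC") (auto simp: h(2,3) der_zero[OF S_alg])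
  have lh: "lm (h \<gamma>)" for \<gamma> using hder der_lm by blast
  have "\<forall>p. \<exists>Fc. (fst p \<in> BC \<and> snd p < m) \<longrightarrow> finite (fst Fc) \<and> fst Fc \<subseteq> BCk (snd p) \<and>
      gA.comp (fst p) (snd p) = (\<lambda>x. \<Sum>\<beta>\<in>fst Fc. sc (snd Fc \<beta>) (\<beta> x))"
  proof
    fix p :: "('a,'k) op \<times> nat"
    show "\<exists>Fc. (fst p \<in> BC \<and> snd p < m) \<longrightarrow> finite (fst Fc) \<and> fst Fc \<subseteq> BCk (snd p) \<and>
      gA.comp (fst p) (snd p) = (\<lambda>x. \<Sum>\<beta>\<in>fst Fc. sc (snd Fc \<beta>) (\<beta> x))"
    proof (cases "fst p \<in> BC \<and> snd p < m")
      case True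
      then have cm: "gA.comp (fst p) (snd p) \<in> centroid MA \<inter> End_deg m \<omega> \<sigma>1 (snd p)"
        using gA.comp_cen[OF BC_cen] gA.comp_End[OF BC_lm] by blast
      have bs: "is_basis (centroid MA \<inter> End_deg m \<omega> \<sigma>1 (snd p)) (BCk (snd p))" using basisCk True by blast
      from basis_span[OF bs cm] obtain F c where "finite F" "F \<subseteq> BCk (snd p)" "gA.comp (fst p) (snd p) = (\<lambda>x. \<Sum>\<beta>\<in>F. sc (c \<beta>) (\<beta> x))"
        by blast
      then show ?thesis by (intro exI[of _ "(F, c)"]) simp
    qed blast
  qed
  then obtain Fc where Fc: "\<And>p. (fst p \<in> BC \<and> snd p < m) \<Longrightarrow> finite (fst (Fc p)) \<and> fst (Fc p) \<subseteq> BCk (snd p) \<and>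
      gA.comp (fst p) (snd p) = (\<lambda>x. \<Sum>\<beta>\<in>fst (Fc p). sc (snd (Fc p) \<beta>) (\<beta> x))"
    by (rule choice[THEN exE]) blast
  define Fk where "Fk k \<gamma> = (if \<gamma> \<in> BC \<and> k < m then fst (Fc (\<gamma>, k)) else {})" for k \<gamma>
  define ck where "ck k \<gamma> = snd (Fc (\<gamma>, k))" for k \<gamma>
  define \<phi> where "\<phi> k \<gamma> = (\<lambda>x. \<Sum>\<beta>\<in>Fk k \<gamma>. sc (ck k \<gamma> \<beta>) (\<beta> x))" for k \<gamma>
  have phiC: "\<gamma> \<in> BC \<Longrightarrow> k < m \<Longrightarrow> \<phi> k \<gamma> = gA.comp \<gamma> k" for k \<gamma>
    using Fc[of "(\<gamma>, k)"] by (simp add: \<phi>_def Fk_def ck_def)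
  have finF: "finite (Fk k \<gamma>)" for k \<gamma> using Fc[of "(\<gamma>, k)"] by (simp add: Fk_def)
  have FB: "k < m \<Longrightarrow> Fk k \<gamma> \<subseteq> BCk k" for k \<gamma> using Fc[of "(\<gamma>, k)"] by (simp add: Fk_def)
  define h' where "h' l \<gamma> = gS.comp (h \<gamma>) l" for l \<gamma>
  have Sh': "summable_fam (h' l)" for l unfolding h'_def[abs_def] by (rule gS.comp_summable[OF h(4)])
  have h'W: "h' l \<gamma> \<in> derivations MS \<inter> End_deg m \<omega> \<sigma>2 l" for l \<gamma>
    unfolding h'_def using gS.comp_der[OF hder] gS.comp_End[OF lh] by blast
  define W where "W k l = opsum (\<lambda>\<gamma>. optens (\<phi> k \<gamma>) (h' l \<gamma>))" for k l
  have mem: "W k l \<in> rtensor (BCk k) (derivations MS \<inter> End_deg m \<omega> \<sigma>2 l)" if k: "k < m" for k l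
  proof -
    define G where "G = (\<lambda>\<beta>. if \<beta> \<in> BCk k then opsum (\<lambda>\<gamma> s. sc (if \<beta> \<in> Fk k \<gamma> then ck k \<gamma> \<beta> else 0) (h' l \<gamma> s)) else (\<lambda>s. 0))"
    have reb: "W k l = opsum (\<lambda>\<beta>. optens \<beta> (G \<beta>))" "summable_fam G"
      using rebase[where \<phi>="\<phi> k" and g="h' l" and F="Fk k" and c="ck k" and B="BCk k",
          OF Sh' finF FB[OF k] \<phi>_def[of k]]
      unfolding G_def W_def by blast+
    have GW: "G \<beta> \<in> derivations MS \<inter> End_deg m \<omega> \<sigma>2 l" if "\<beta> \<in> BCk k" for \<beta>
    proof -
      let ?F = "\<lambda>\<gamma> s. sc (if \<beta> \<in> Fk k \<gamma> then ck k \<gamma> \<beta> else 0) (h' l \<gamma> s)"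
      have S2: "summable_fam ?F"
        unfolding summable_fam_def
      proof
        fix s
        have "{\<gamma>. ?F \<gamma> s \<noteq> 0} \<subseteq> {\<gamma>. h' l \<gamma> s \<noteq> 0}" by auto
        then show "finite {\<gamma>. ?F \<gamma> s \<noteq> 0}" using Sh'[of l] finite_subset unfolding summable_fam_def by blast
      qed
      have "opsum ?F \<in> derivations MS"
        by (rule der_opsum[OF S2 der_sc[OF S_alg] S_alg]) (use h'W in blast)
      moreover have "opsum ?F \<in> End_deg m \<omega> \<sigma>2 l"
        by (rule gS.End_opsum[OF S2 gS.End_sc]) (use h'W in blast)
      ultimately show ?thesis using that by (simp add: G_def)
    qed
    have Gout: "\<beta> \<notin> BCk k \<Longrightarrow> G \<beta> = (\<lambda>_. 0)" for \<beta> by (simp add: G_def)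
    show ?thesis unfolding rtensor_def using reb GW Gout by blast
  qed
  have "Y u = (\<Sum>k<m. \<Sum>l<m. W k l u)" for u
  proof -
    have A: "(\<lambda>\<gamma>. optens \<gamma> (h \<gamma>)) = (\<lambda>\<gamma> x. \<Sum>k<m. optens (\<phi> k \<gamma>) (h \<gamma>) x)"
    proof (intro ext)
      fix \<gamma> x
      show "optens \<gamma> (h \<gamma>) x = (\<Sum>k<m. optens (\<phi> k \<gamma>) (h \<gamma>) x)"
      proof (cases "\<gamma> \<in> BC")
        case True
        have "optens \<gamma> (h \<gamma>) x = optens (\<lambda>y. \<Sum>k<m. gA.comp \<gamma> k y) (h \<gamma>) x"
          by (subst gA.comp_expand[OF BC_lm[OF True]]) (rule refl)
        also have "\<dots> = (\<Sum>k<m. optens (gA.comp \<gamma> k) (h \<gamma>) x)" by (rule optens_sum1)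
        also have "\<dots> = (\<Sum>k<m. optens (\<phi> k \<gamma>) (h \<gamma>) x)" by (rule sum.cong) (auto simp: phiC True)
        finally show ?thesis .
      qed (simp add: h(3))
    qed
    have B: "(\<lambda>\<gamma>. optens (\<phi> k \<gamma>) (h \<gamma>)) = (\<lambda>\<gamma> x. \<Sum>l<m. optens (\<phi> k \<gamma>) (h' l \<gamma>) x)" for k
    proof (intro ext)
      fix \<gamma> x
      have "optens (\<phi> k \<gamma>) (h \<gamma>) x = optens (\<phi> k \<gamma>) (\<lambda>y. \<Sum>l<m. gS.comp (h \<gamma>) l y) x"
        by (subst gS.comp_expand[OF lh]) (rule refl)
      then show "optens (\<phi> k \<gamma>) (h \<gamma>) x = (\<Sum>l<m. optens (\<phi> k \<gamma>) (h' l \<gamma>) x)"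
        by (simp add: optens_sum2 h'_def)
    qed
    have "Y u = (\<Sum>k<m. opsum (\<lambda>\<gamma>. optens (\<phi> k \<gamma>) (h \<gamma>)) u)"
      unfolding h(1) A by (rule opsum_fsum) (auto intro: summable_optens2 h(4))
    also have "\<dots> = (\<Sum>k<m. \<Sum>l<m. W k l u)"
      unfolding W_def B by (rule sum.cong[OF refl], rule opsum_fsum) (auto intro: summable_optens2 Sh')
    finally show ?thesis .
  qed
  then show ?thesis using mem by blast
qed

end



lemma mod_arith4: "0 < m \<Longrightarrow> k < m \<Longrightarrow> j < m \<Longrightarrow> (k + (j + m - k) mod m) mod m = (j::nat)"
proof -
  assume a: "0 < m" "k < m" "j < m"
  have "(k + (j + m - k) mod m) mod m = (k + (j + m - k)) mod m" by (simp add: mod_add_right_eq)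
  also have "k + (j + m - k) = j + m" using a by simp
  finally show ?thesis using a by simp
qed

lemma reindex_sub: "0 < m \<Longrightarrow> k < m \<Longrightarrow> (\<Sum>l<m. f l) = (\<Sum>j<(m::nat). f ((j + m - k) mod m))"
proof -
  assume a: "0 < m" "k < m"
  have "(\<Sum>j<m. f ((j + m - k) mod m)) = (\<Sum>j<m. f ((m - k + j) mod m))"
  proof (rule sum.cong[OF refl])
    fix j assume "j \<in> {..<m}"
    have eq: "j + m - k = m - k + j" using a by arith
    show "f ((j + m - k) mod m) = f ((m - k + j) mod m)" by (simp only: eq)
  qed
  also have "\<dots> = (\<Sum>l<m. f l)" by (rule sum_shift[OF a(1)])
  finally show ?thesis by simp
qed

context grading begin

lemma comp_self: assumes "T \<in> End_deg m \<omega> \<sigma> j" "j < m" shows "comp T j x = T x"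
proof -
  have "comp T j x = (if j = j then T else (\<lambda>x. 0)) x"
  proof (rule comp_unique[where Z="\<lambda>j'. if j' = j then T else (\<lambda>x. 0)"])
    show "(if j' = j then T else (\<lambda>x. 0)) \<in> End_deg m \<omega> \<sigma> j'" for j' using assms End_zero by auto
    show "T y = (\<Sum>j'<m. (if j' = j then T else (\<lambda>x. 0)) y)" for y
      using assms(2) by (simp add: if_distrib[of "\<lambda>f. f y"] cong: if_cong)
  qed (rule assms(2))
  then show ?thesis by simp
qed

lemma End_add: "S \<in> End_deg m \<omega> \<sigma> j \<Longrightarrow> T \<in> End_deg m \<omega> \<sigma> j \<Longrightarrow> (\<lambda>x. S x + T x) \<in> End_deg m \<omega> \<sigma> j"
  unfolding End_deg_iff by (auto intro: lm_plus V_add)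

lemma End_mod: "End_deg m \<omega> \<sigma> (a mod m) = End_deg m \<omega> \<sigma> a"
  unfolding End_deg_def by (simp add: mod_add_left_eq)

end

lemma der_add: "bilin M \<Longrightarrow> d \<in> derivations M \<Longrightarrow> d' \<in> derivations M \<Longrightarrow> (\<lambda>x. d x + d' x) \<in> derivations M"
  by (simp add: derivations_def lin_lm lm_plus lm_add[OF bilin_lm1] lm_add[OF bilin_lm2] algebra_simps)

context L31 begin

abbreviation "DT j \<equiv> derivations MT \<inter> End_deg m \<omega> sig j"
abbreviation "LT \<equiv> ltensor (derivations MA) (Lset MS UNIV)"
abbreviation "RT \<equiv> rtensor BC (derivations MS)"
abbreviation "ZL j \<equiv> zsum m (\<lambda>k. ltensor (derivations MA \<inter> End_deg m \<omega> \<sigma>1 k) (Lset MS (eigsp \<omega> \<sigma>2 ((j + m - k) mod m))))"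
abbreviation "ZR j \<equiv> zsum m (\<lambda>k. rtensor (BCk k) (derivations MS \<inter> End_deg m \<omega> \<sigma>2 ((j + m - k) mod m)))"

lemma ZL_sub: assumes j: "j < m" and x: "x \<in> ZL j" shows "x \<in> LT \<and> x \<in> DT j"
proof -
  obtain T where T: "x = (\<lambda>u. \<Sum>k<m. T k u)"
    "\<And>k. k < m \<Longrightarrow> T k \<in> ltensor (derivations MA \<inter> End_deg m \<omega> \<sigma>1 k) (Lset MS (eigsp \<omega> \<sigma>2 ((j + m - k) mod m)))"
    using x unfolding zsum_def by blast
  have h: "T k \<in> derivations MT \<and> T k \<in> End_deg m \<omega> sig j" if "k < m" for k
    using LT_hom[OF T(2)[OF that]] mod_arith4[OF m_pos that j] gT.End_mod by metis
  have "x \<in> LT" unfolding T(1) by (rule LT_sum[OF T(2)]) (auto simp: Lset_def)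
  moreover have "x \<in> derivations MT" unfolding T(1) by (rule der_sum[OF bilin_tmult]) (use h in auto)
  moreover have "x \<in> End_deg m \<omega> sig j" unfolding T(1) by (rule gT.End_sum) (use h in auto)
  ultimately show ?thesis by blast
qed

lemma ZR_sub: assumes j: "j < m" and x: "x \<in> ZR j" shows "x \<in> RT \<and> x \<in> DT j"
proof -
  obtain T where T: "x = (\<lambda>u. \<Sum>k<m. T k u)"
    "\<And>k. k < m \<Longrightarrow> T k \<in> rtensor (BCk k) (derivations MS \<inter> End_deg m \<omega> \<sigma>2 ((j + m - k) mod m))"
    using x unfolding zsum_def by blast
  have h: "T k \<in> derivations MT \<and> T k \<in> End_deg m \<omega> sig j" if "k < m" for k
    using RT_hom[OF T(2)[OF that] that] mod_arith4[OF m_pos that j] gT.End_mod by metis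
  have "x \<in> RT" unfolding T(1) by (rule RT_sum[OF T(2)]) auto
  moreover have "x \<in> derivations MT" unfolding T(1) by (rule der_sum[OF bilin_tmult]) (use h in auto)
  moreover have "x \<in> End_deg m \<omega> sig j" unfolding T(1) by (rule gT.End_sum) (use h in auto)
  ultimately show ?thesis by blast
qed

lemma regroup:
  fixes Z :: "nat \<Rightarrow> nat \<Rightarrow> ('a \<times> 'b, 'k) op"
  shows "(\<Sum>k<m. \<Sum>l<m. Z k l u) = (\<Sum>j<m. \<Sum>k<m. Z k ((j + m - k) mod m) u)"
proof -
  have "(\<Sum>k<m. \<Sum>l<m. Z k l u) = (\<Sum>k<m. \<Sum>j<m. Z k ((j + m - k) mod m) u)"
    by (rule sum.cong[OF refl], rule reindex_sub[OF m_pos]) simp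
  also have "\<dots> = (\<Sum>j<m. \<Sum>k<m. Z k ((j + m - k) mod m) u)" by (rule sum.swap)
  finally show ?thesis .
qed

lemma LT_in_ZL:
  assumes j: "j < m" and X: "X \<in> LT" "X \<in> End_deg m \<omega> sig j"
  shows "X \<in> ZL j"
proof -
  obtain Z where Z: "\<And>k l. k < m \<Longrightarrow> l < m \<Longrightarrow> Z k l \<in> ltensor (derivations MA \<inter> End_deg m \<omega> \<sigma>1 k) (Lset MS (eigsp \<omega> \<sigma>2 l))"
    "\<And>u. X u = (\<Sum>k<m. \<Sum>l<m. Z k l u)"
    using LT_decomp[OF X(1)] by blast
  define Zj where "Zj j' = (\<lambda>u. \<Sum>k<m. Z k ((j' + m - k) mod m) u)" for j'
  have ZjE: "Zj j' \<in> End_deg m \<omega> sig j'" if "j' < m" for j'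
    unfolding Zj_def
  proof (rule gT.End_sum)
    fix k assume k: "k \<in> {..<m}"
    have "(j' + m - k) mod m < m" using m_pos by simp
    then show "Z k ((j' + m - k) mod m) \<in> End_deg m \<omega> sig j'"
      using LT_hom[OF Z(1)] k mod_arith4[OF m_pos _ that, of k] gT.End_mod by (metis lessThan_iff)
  qed
  have XZ: "X y = (\<Sum>j'<m. Zj j' y)" for y unfolding Zj_def using Z(2)[of y] regroup[of Z y] by simp
  have "gT.comp X j x = Zj j x" for x
    by (rule gT.comp_unique[OF ZjE XZ j])
  moreover have "gT.comp X j x = X x" for x by (rule gT.comp_self[OF X(2) j])
  ultimately have "X = Zj j" by auto
  moreover have "Zj j \<in> ZL j" unfolding Zj_def zsum_def
    by (intro CollectI exI[of _ "\<lambda>k. Z k ((j + m - k) mod m)"] conjI refl allI impI Z(1)) (use m_pos in auto)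
  ultimately show ?thesis by simp
qed

lemma RT_in_ZR:
  assumes j: "j < m" and Y: "Y \<in> RT" "Y \<in> End_deg m \<omega> sig j"
  shows "Y \<in> ZR j"
proof -
  obtain W where W: "\<And>k l. k < m \<Longrightarrow> l < m \<Longrightarrow> W k l \<in> rtensor (BCk k) (derivations MS \<inter> End_deg m \<omega> \<sigma>2 l)"
    "\<And>u. Y u = (\<Sum>k<m. \<Sum>l<m. W k l u)"
    using RT_decomp[OF Y(1)] by blast
  define Wj where "Wj j' = (\<lambda>u. \<Sum>k<m. W k ((j' + m - k) mod m) u)" for j'
  have WjE: "Wj j' \<in> End_deg m \<omega> sig j'" if "j' < m" for j'
    unfolding Wj_def
  proof (rule gT.End_sum)
    fix k assume k: "k \<in> {..<m}"
    have "(j' + m - k) mod m < m" using m_pos by simp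
    then show "W k ((j' + m - k) mod m) \<in> End_deg m \<omega> sig j'"
      using RT_hom[OF W(1)] k mod_arith4[OF m_pos _ that, of k] gT.End_mod by (metis lessThan_iff)
  qed
  have YW: "Y y = (\<Sum>j'<m. Wj j' y)" for y unfolding Wj_def using W(2)[of y] regroup[of W y] by simp
  have "gT.comp Y j x = Wj j x" for x
    by (rule gT.comp_unique[OF WjE YW j])
  moreover have "gT.comp Y j x = Y x" for x by (rule gT.comp_self[OF Y(2) j])
  ultimately have "Y = Wj j" by auto
  moreover have "Wj j \<in> ZR j" unfolding Wj_def zsum_def
    by (intro CollectI exI[of _ "\<lambda>k. W k ((j + m - k) mod m)"] conjI refl allI impI W(1)) (use m_pos in auto)
  ultimately show ?thesis by simp
qed

lemma DT_split:
  assumes j: "j < m" and d: "d \<in> DT j"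
  shows "\<exists>x y. d = (\<lambda>u. x u + y u) \<and> x \<in> LT \<inter> DT j \<and> y \<in> RT \<inter> DT j"
proof -
  obtain X Y where XY: "X \<in> LT" "Y \<in> RT" "d = (\<lambda>u. X u + Y u)" using decomp d by blast
  obtain Z where Z: "\<And>k l. k < m \<Longrightarrow> l < m \<Longrightarrow> Z k l \<in> ltensor (derivations MA \<inter> End_deg m \<omega> \<sigma>1 k) (Lset MS (eigsp \<omega> \<sigma>2 l))"
    "\<And>u. X u = (\<Sum>k<m. \<Sum>l<m. Z k l u)"
    using LT_decomp[OF XY(1)] by blast
  obtain W where W: "\<And>k l. k < m \<Longrightarrow> l < m \<Longrightarrow> W k l \<in> rtensor (BCk k) (derivations MS \<inter> End_deg m \<omega> \<sigma>2 l)"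
    "\<And>u. Y u = (\<Sum>k<m. \<Sum>l<m. W k l u)"
    using RT_decomp[OF XY(2)] by blast
  define Zj where "Zj j' = (\<lambda>u. \<Sum>k<m. Z k ((j' + m - k) mod m) u)" for j'
  define Wj where "Wj j' = (\<lambda>u. \<Sum>k<m. W k ((j' + m - k) mod m) u)" for j'
  have ZjZ: "Zj j' \<in> ZL j'" for j' unfolding Zj_def zsum_def
    by (intro CollectI exI[of _ "\<lambda>k. Z k ((j' + m - k) mod m)"] conjI refl allI impI Z(1)) (use m_pos in auto)
  have WjW: "Wj j' \<in> ZR j'" for j' unfolding Wj_def zsum_def
    by (intro CollectI exI[of _ "\<lambda>k. W k ((j' + m - k) mod m)"] conjI refl allI impI W(1)) (use m_pos in auto)
  have ZjD: "Zj j' \<in> LT \<and> Zj j' \<in> DT j'" if "j' < m" for j' using ZL_sub[OF that ZjZ] .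
  have WjD: "Wj j' \<in> RT \<and> Wj j' \<in> DT j'" if "j' < m" for j' using ZR_sub[OF that WjW] .
  have "gT.comp d j x = (\<lambda>u. Zj j u + Wj j u) x" for x
  proof (rule gT.comp_unique[where Z="\<lambda>j' u. Zj j' u + Wj j' u", OF _ _ j])
    show "(\<lambda>u. Zj j' u + Wj j' u) \<in> End_deg m \<omega> sig j'" if "j' < m" for j'
      using ZjD[OF that] WjD[OF that] by (intro gT.End_add) auto
    show "d y = (\<Sum>j'<m. Zj j' y + Wj j' y)" for y
      by (simp only: XY(3) Z(2) W(2) regroup[of Z] regroup[of W] Zj_def Wj_def sum.distrib)
  qed
  moreover have "gT.comp d j x = d x" for x using d j by (intro gT.comp_self) auto
  ultimately have "d = (\<lambda>u. Zj j u + Wj j u)" by auto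
  then show ?thesis using ZjD[OF j] WjD[OF j] by blast
qed

lemma main_result:
  "derivations MT = zsum m DT \<and>
   (\<forall>j<m. direct_sum (DT j) (LT \<inter> DT j) (RT \<inter> DT j) \<and> LT \<inter> DT j = ZL j \<and> RT \<inter> DT j = ZR j)"
proof (intro conjI allI impI)
  show "derivations MT = zsum m DT"
  proof
    show "derivations MT \<subseteq> zsum m DT"
    proof
      fix d assume d: "d \<in> derivations MT"
      have "d = (\<lambda>u. \<Sum>k<m. gT.comp d k u)" by (rule gT.comp_expand[OF der_lm[OF d]])
      moreover have "gT.comp d k \<in> DT k" for k using gT.comp_der[OF d] gT.comp_End[OF der_lm[OF d]] by blast
      ultimately show "d \<in> zsum m DT" unfolding zsum_def by blast
    qed
    show "zsum m DT \<subseteq> derivations MT"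
    proof
      fix x assume "x \<in> zsum m DT"
      then obtain T where T: "x = (\<lambda>u. \<Sum>k<m. T k u)" "\<And>k. k < m \<Longrightarrow> T k \<in> DT k" unfolding zsum_def by blast
      show "x \<in> derivations MT" unfolding T(1) by (rule der_sum[OF bilin_tmult]) (use T(2) in auto)
    qed
  qed
  fix j assume j: "j < m"
  show "LT \<inter> DT j = ZL j"
  proof
    show "LT \<inter> DT j \<subseteq> ZL j" using LT_in_ZL[OF j] by blast
    show "ZL j \<subseteq> LT \<inter> DT j" using ZL_sub[OF j] by blast
  qed
  show "RT \<inter> DT j = ZR j"
  proof
    show "RT \<inter> DT j \<subseteq> ZR j" using RT_in_ZR[OF j] by blast
    show "ZR j \<subseteq> RT \<inter> DT j" using ZR_sub[OF j] by blast
  qed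
  show "direct_sum (DT j) (LT \<inter> DT j) (RT \<inter> DT j)"
    unfolding direct_sum_def
  proof (intro conjI)
    show "DT j = {(\<lambda>u. x u + y u) |x y. x \<in> LT \<inter> DT j \<and> y \<in> RT \<inter> DT j}"
    proof
      show "DT j \<subseteq> {(\<lambda>u. x u + y u) |x y. x \<in> LT \<inter> DT j \<and> y \<in> RT \<inter> DT j}"
        using DT_split[OF j] by blast
      show "{(\<lambda>u. x u + y u) |x y. x \<in> LT \<inter> DT j \<and> y \<in> RT \<inter> DT j} \<subseteq> DT j"
        by (auto intro: der_add[OF bilin_tmult] gT.End_add)
    qed
    show "LT \<inter> DT j \<inter> (RT \<inter> DT j) = {\<lambda>u. 0}"
    proof
      show "LT \<inter> DT j \<inter> (RT \<inter> DT j) \<subseteq> {\<lambda>u. 0}" using inter_zero by blast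
      have "MS 0 \<in> Lset MS UNIV" by (auto simp: Lset_def)
      then have "(\<lambda>u. 0) \<in> LT" by (rule ltensor_zero[OF der_zero[OF A_alg]])
      moreover have "(\<lambda>u. 0) \<in> RT" by (rule rtensor_zero) (rule der_zero[OF S_alg])
      moreover have "(\<lambda>u. 0) \<in> DT j" using der_zero[OF bilin_tmult] gT.End_zero by blast
      ultimately show "{\<lambda>u. 0} \<subseteq> LT \<inter> DT j \<inter> (RT \<inter> DT j)" by blast
    qed
  qed
qed

end

theorem lemma3p1:
  fixes \<omega> :: "'k::field" and m :: nat
    and MA :: "('a,'k) prod" and MS :: "('b,'k) prod"
    and \<sigma>1 :: "('a,'k) op" and \<sigma>2 :: "('b,'k) op"
    and BC :: "('a,'k) op set" and BCk :: "nat \<Rightarrow> ('a,'k) op set"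
  assumes m_pos: "0 < m"
    and root: "\<omega> ^ m = 1" and primitive: "\<forall>i. 0 < i \<and> i < m \<longrightarrow> \<omega> ^ i \<noteq> 1"
    and A_alg: "bilin MA" and A_perfect: "perfect MA"
    and S_alg: "bilin MS" and S_cau: "comm_assoc_unital MS"
    and psi: "psi_iso MA MS"
    and aut1: "automorphism MA \<sigma>1" and per1: "\<sigma>1 ^^ m = id"
    and aut2: "automorphism MS \<sigma>2" and per2: "\<sigma>2 ^^ m = id"
    and basisC: "is_basis (centroid MA) BC"
    and basisCk: "\<forall>k<m. is_basis (centroid MA \<inter> End_deg m \<omega> \<sigma>1 k) (BCk k)"
  shows "let MT = tmult MA MS; \<sigma> = optens \<sigma>1 \<sigma>2;
             DT = (\<lambda>j. derivations MT \<inter> End_deg m \<omega> \<sigma> j) in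
         derivations MT = zsum m DT \<and>
         (\<forall>j<m.
            direct_sum (DT j) (ltensor (derivations MA) (Lset MS UNIV) \<inter> DT j)
                              (rtensor BC (derivations MS) \<inter> DT j)
          \<and> ltensor (derivations MA) (Lset MS UNIV) \<inter> DT j
              = zsum m (\<lambda>k. ltensor (derivations MA \<inter> End_deg m \<omega> \<sigma>1 k)
                                    (Lset MS (eigsp \<omega> \<sigma>2 ((j + m - k) mod m))))
          \<and> rtensor BC (derivations MS) \<inter> DT j
              = zsum m (\<lambda>k. rtensor (BCk k)
                                    (derivations MS \<inter> End_deg m \<omega> \<sigma>2 ((j + m - k) mod m))))"
proof -
  interpret L31 \<omega> m MA MS \<sigma>1 \<sigma>2 BC BCk
    by unfold_locales (fact assms)+
  show ?thesis unfolding Let_def by (rule main_result)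
qed



end
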